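(* Let $\Sigma\in\mathbb{R}^{p\times p}$ be real symmetric with all eigenvalues in $[\kappa_{\min},\kappa_{\max}]$, $0<\kappa_{\min}\le\kappa_{\max}<\infty$, and block-diagonal with blocks $\Sigma_1,\dots,\Sigma_k$, each of size at most a constant $m$. Let $X\in\mathbb{R}^{n\times p}$ have independent rows $x_i=z_i\Sigma^{1/2}$, where each $z_i$ has independent sub-Gaussian entries with mean $0$, variance $1$ and sub-Gaussian norm bounded by a constant. Let $\hat\Sigma$ be block-diagonal with blocks $\hat\Sigma_j=\frac1nX_j^\top X_j$, where $X_j$ is the submatrix of columns of $X$ corresponding to block $j$. Then, as $n\to\infty$ with $p/n\to\delta\in(0,\infty)$, $\|\hat\Sigma-\Sigma\|_{\mathrm{op}}\overset{P}{\to}0$.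
   Context: $\|\cdot\|_{\mathrm{op}}$ denotes the operator norm. The block structure of $\hat\Sigma$ is the same as that of $\Sigma$. *)

theory Defs
  imports "HOL-Probability.Probability" "Jordan_Normal_Form.Char_Poly"
begin

definition vnorm :: "real vec \<Rightarrow> real" where
  "vnorm v = sqrt (v \<bullet> v)"

definition op_norm :: "real mat \<Rightarrow> real" where
  "op_norm A = (SUP v \<in> {v \<in> carrier_vec (dim_col A). vnorm v \<le> 1}. vnorm (A *\<^sub>v v))"

definition blk_start :: "nat list \<Rightarrow> nat \<Rightarrow> nat" where
  "blk_start bs t = sum_list (take t bs)"

definition same_block :: "nat list \<Rightarrow> nat \<Rightarrow> nat \<Rightarrow> bool" where
  "same_block bs i j = (\<exists>t < length bs.
      blk_start bs t \<le> i \<and> i < blk_start bs (Suc t) \<and>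
      blk_start bs t \<le> j \<and> j < blk_start bs (Suc t))"

definition block_diagonal :: "nat list \<Rightarrow> real mat \<Rightarrow> bool" where
  "block_diagonal bs A = (\<forall>i < dim_row A. \<forall>j < dim_col A. \<not> same_block bs i j \<longrightarrow> A $$ (i, j) = 0)"

text \<open>Block-diagonal sample covariance: block t equals (1/n) X_t^T X_t, where X_t are the columns of X in block t.\<close>
definition block_sample_cov :: "nat list \<Rightarrow> real mat \<Rightarrow> real mat" where
  "block_sample_cov bs X = mat (dim_col X) (dim_col X) (\<lambda>(i, j).
      if same_block bs i j
      then (1 / real (dim_row X)) * (\<Sum>l < dim_row X. X $$ (l, i) * X $$ (l, j))
      else 0)"

definition subgaussian_norm_le :: "'a measure \<Rightarrow> ('a \<Rightarrow> real) \<Rightarrow> real \<Rightarrow> bool" where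
  "subgaussian_norm_le M Z K = ((\<integral>\<^sup>+ x. ennreal (exp ((Z x)\<^sup>2 / K\<^sup>2)) \<partial>M) \<le> 2)"

end

theory Submission
  imports Defs "Jordan_Normal_Form.Spectral_Radius"
begin

lemma pow_mat_add:
  assumes A: "A \<in> carrier_mat n n"
  shows "A ^\<^sub>m (k + l) = A ^\<^sub>m k * A ^\<^sub>m l"
proof (induct l)
  case 0 then show ?case using A by simp
next
  case (Suc l)
  have "A ^\<^sub>m (k + Suc l) = (A ^\<^sub>m k * A ^\<^sub>m l) * A" using Suc by simp
  also have "\<dots> = A ^\<^sub>m k * (A ^\<^sub>m l * A)"
    by (rule assoc_mult_mat[of _ n n _ n _ n]) (use A in auto)
  finally show ?case by simp
qed

lemma transpose_pow_mat:
  fixes A :: "'a :: comm_semiring_1 mat"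
  assumes A: "A \<in> carrier_mat n n" and sym: "transpose_mat A = A"
  shows "transpose_mat (A ^\<^sub>m k) = A ^\<^sub>m k"
proof (induct k)
  case 0 then show ?case using A by simp
next
  case (Suc k)
  have "transpose_mat (A ^\<^sub>m Suc k) = transpose_mat A * transpose_mat (A ^\<^sub>m k)"
    using A by (simp add: transpose_mult[of _ n n _ n])
  also have "\<dots> = A * A ^\<^sub>m k" using Suc sym by simp
  also have "\<dots> = A ^\<^sub>m (1 + k)" using pow_mat_add[OF A, of 1 k] A by simp
  finally show ?case by simp
qed

lemma sym_square_diag:
  fixes B :: "real mat"
  assumes B: "B \<in> carrier_mat n n" and sym: "transpose_mat B = B" and i: "i < n"
  shows "(B $$ (i,i))\<^sup>2 \<le> (B * B) $$ (i,i)"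
proof -
  have "(B * B) $$ (i,i) = (\<Sum>j<n. B $$ (i,j) * B $$ (j,i))"
    using B i by (simp add: scalar_prod_def atLeast0LessThan)
  also have "\<dots> = (\<Sum>j<n. (B $$ (i,j))\<^sup>2)"
  proof (rule sum.cong)
    fix j assume "j \<in> {..<n}"
    then have "B $$ (j,i) = transpose_mat B $$ (i,j)" using B i by simp
    then show "B $$ (i,j) * B $$ (j,i) = (B $$ (i,j))\<^sup>2" using sym by (simp add: power2_eq_square)
  qed simp
  also have "\<dots> \<ge> (\<Sum>j\<in>{i}. (B $$ (i,j))\<^sup>2)"
    by (rule sum_mono2) (use i in auto)
  finally show ?thesis by simp
qed

lemma diag_pow2:
  fixes A :: "real mat"
  assumes A: "A \<in> carrier_mat n n" and sym: "transpose_mat A = A" and i: "i < n"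
  shows "\<bar>A $$ (i,i)\<bar> ^ (2 ^ Suc k) \<le> (A ^\<^sub>m (2 ^ Suc k)) $$ (i,i)"
proof (induct k)
  case 0
  have "A ^\<^sub>m (2 ^ Suc 0) = A * A" using A by (simp add: numeral_2_eq_2)
  then show ?case using sym_square_diag[OF A sym i] by (simp add: power2_eq_square)
next
  case (Suc k)
  let ?B = "A ^\<^sub>m (2 ^ Suc k)"
  have B: "?B \<in> carrier_mat n n" using A by simp
  have eq: "A ^\<^sub>m (2 ^ Suc (Suc k)) = ?B * ?B"
    using pow_mat_add[OF A, of "2 ^ Suc k" "2 ^ Suc k"] by (simp add: mult_2)
  have "\<bar>A $$ (i,i)\<bar> ^ (2 ^ Suc (Suc k)) = (\<bar>A $$ (i,i)\<bar> ^ (2 ^ Suc k))\<^sup>2"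
    by (simp add: power_mult[symmetric] mult.commute)
  also have "\<dots> \<le> (?B $$ (i,i))\<^sup>2"
    by (rule power_mono[OF Suc]) simp
  also have "\<dots> \<le> (?B * ?B) $$ (i,i)"
    by (rule sym_square_diag[OF B transpose_pow_mat[OF A sym] i])
  finally show ?case using eq by simp
qed

lemma complex_eig_real:
  fixes A :: "real mat"
  assumes A: "A \<in> carrier_mat n n" and sym: "transpose_mat A = A"
    and ev: "eigenvalue (map_mat complex_of_real A) l"
  shows "l = complex_of_real (Re l) \<and> eigenvalue A (Re l)"
proof -
  let ?B = "map_mat complex_of_real A"
  obtain v where v: "v \<in> carrier_vec n" "v \<noteq> 0\<^sub>v n" "?B *\<^sub>v v = l \<cdot>\<^sub>v v"
    using ev A unfolding eigenvalue_def eigenvector_def by auto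
  have Bv: "(\<Sum>j<n. complex_of_real (A $$ (i,j)) * v $ j) = l * v $ i" if "i < n" for i
  proof -
    have "(?B *\<^sub>v v) $ i = l * v $ i" using v(3) that v(1) by simp
    then show ?thesis using that A v(1) by (simp add: scalar_prod_def atLeast0LessThan)
  qed
  define q where "q = (\<Sum>i<n. cnj (v $ i) * (\<Sum>j<n. complex_of_real (A $$ (i,j)) * v $ j))"
  define N where "N = (\<Sum>i<n. (cmod (v $ i))\<^sup>2)"
  have "q = (\<Sum>i<n. cnj (v $ i) * (l * v $ i))"
    unfolding q_def by (rule sum.cong) (auto simp: Bv)
  also have "\<dots> = (\<Sum>i<n. l * complex_of_real ((cmod (v $ i))\<^sup>2))"
    by (rule sum.cong, simp, subst complex_norm_square, simp)
  finally have q1: "q = l * complex_of_real N"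
    unfolding N_def by (simp add: sum_distrib_left)
  have symA: "A $$ (j,i) = A $$ (i,j)" if "i < n" "j < n" for i j
  proof -
    have "A $$ (j,i) = transpose_mat A $$ (i,j)" using A that by simp
    then show ?thesis using sym by simp
  qed
  have "cnj q = (\<Sum>i<n. \<Sum>j<n. v $ i * complex_of_real (A $$ (i,j)) * cnj (v $ j))"
    unfolding q_def by (simp add: sum_distrib_left mult_ac)
  also have "\<dots> = (\<Sum>j<n. \<Sum>i<n. v $ i * complex_of_real (A $$ (i,j)) * cnj (v $ j))"
    by (rule sum.swap)
  also have "\<dots> = q"
    unfolding q_def by (auto simp add: sum_distrib_left mult_ac symA intro!: sum.cong)
  finally have cq: "cnj q = q" .
  have Npos: "N > 0"
  proof -
    obtain i where i: "i < n" "v $ i \<noteq> 0" using v(1,2) by (metis eq_vecI carrier_vecD index_zero_vec)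
    have "N \<ge> (\<Sum>i\<in>{i}. (cmod (v $ i))\<^sup>2)" unfolding N_def by (rule sum_mono2) (use i in auto)
    moreover have "(cmod (v $ i))\<^sup>2 > 0" using i by simp
    moreover have "(\<Sum>i\<in>{i}. (cmod (v $ i))\<^sup>2) = (cmod (v $ i))\<^sup>2" by simp
    ultimately show ?thesis by linarith
  qed
  have "cnj l * complex_of_real N = l * complex_of_real N" using cq q1 by simp
  then have "cnj l = l" using Npos by simp
  then have lr: "l = complex_of_real (Re l)" by (metis Reals_cnj_iff complex_is_Real_iff of_real_Re)
  define w1 where "w1 = vec n (\<lambda>j. Re (v $ j))"
  define w2 where "w2 = vec n (\<lambda>j. Im (v $ j))"
  have w1e: "A *\<^sub>v w1 = Re l \<cdot>\<^sub>v w1"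
  proof (rule eq_vecI)
    fix i assume "i < dim_vec (Re l \<cdot>\<^sub>v w1)"
    then have i: "i < n" by (simp add: w1_def)
    have "(A *\<^sub>v w1) $ i = (\<Sum>j<n. A $$ (i,j) * Re (v $ j))"
      using A i by (simp add: w1_def scalar_prod_def atLeast0LessThan)
    also have "\<dots> = Re (\<Sum>j<n. complex_of_real (A $$ (i,j)) * v $ j)" by (simp add: Re_sum)
    also have "\<dots> = Re (l * v $ i)" using Bv[OF i] by simp
    also have "\<dots> = Re l * Re (v $ i)" by (subst lr) simp
    finally show "(A *\<^sub>v w1) $ i = (Re l \<cdot>\<^sub>v w1) $ i" using i by (simp add: w1_def)
  qed (use A in \<open>simp add: w1_def\<close>)
  have w2e: "A *\<^sub>v w2 = Re l \<cdot>\<^sub>v w2"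
  proof (rule eq_vecI)
    fix i assume "i < dim_vec (Re l \<cdot>\<^sub>v w2)"
    then have i: "i < n" by (simp add: w2_def)
    have "(A *\<^sub>v w2) $ i = (\<Sum>j<n. A $$ (i,j) * Im (v $ j))"
      using A i by (simp add: w2_def scalar_prod_def atLeast0LessThan)
    also have "\<dots> = Im (\<Sum>j<n. complex_of_real (A $$ (i,j)) * v $ j)" by (simp add: Im_sum)
    also have "\<dots> = Im (l * v $ i)" using Bv[OF i] by simp
    also have "\<dots> = Re l * Im (v $ i)" by (subst lr) simp
    finally show "(A *\<^sub>v w2) $ i = (Re l \<cdot>\<^sub>v w2) $ i" using i by (simp add: w2_def)
  qed (use A in \<open>simp add: w2_def\<close>)
  have "w1 \<noteq> 0\<^sub>v n \<or> w2 \<noteq> 0\<^sub>v n"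
  proof (rule ccontr)
    assume "\<not> ?thesis"
    then have "w1 = 0\<^sub>v n" "w2 = 0\<^sub>v n" by auto
    have "v $ j = 0" if "j < n" for j
    proof -
      have "Re (v $ j) = w1 $ j" "Im (v $ j) = w2 $ j" using that by (simp_all add: w1_def w2_def)
      then show ?thesis using \<open>w1 = 0\<^sub>v n\<close> \<open>w2 = 0\<^sub>v n\<close> that by (simp add: complex_eq_iff)
    qed
    then have "v = 0\<^sub>v n" using v(1) by (intro eq_vecI) auto
    then show False using v(2) by simp
  qed
  then have "eigenvalue A (Re l)"
  proof
    assume "w1 \<noteq> 0\<^sub>v n"
    then show ?thesis unfolding eigenvalue_def eigenvector_def using A w1e
      by (intro exI[of _ w1]) (auto simp: w1_def)
  next
    assume "w2 \<noteq> 0\<^sub>v n"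
    then show ?thesis unfolding eigenvalue_def eigenvector_def using A w2e
      by (intro exI[of _ w2]) (auto simp: w2_def)
  qed
  with lr show ?thesis by simp
qed

lemma sym_diag_le:
  fixes A :: "real mat"
  assumes A: "A \<in> carrier_mat n n" and sym: "transpose_mat A = A"
    and ev: "\<And>e. eigenvalue A e \<Longrightarrow> 0 \<le> e \<and> e \<le> \<kappa>"
    and i: "i < n"
  shows "A $$ (i,i) \<le> \<kappa>"
proof (rule ccontr)
  assume "\<not> ?thesis"
  then have gt: "A $$ (i,i) > \<kappa>" by simp
  have k0: "\<kappa> \<ge> 0"
  proof -
    have "n > 0" using i by simp
    have "map_mat complex_of_real A \<in> carrier_mat n n" using A by simp
    from spectrum_non_empty[OF this \<open>n > 0\<close>]
    obtain l where "eigenvalue (map_mat complex_of_real A) l" unfolding spectrum_def by auto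
    from complex_eig_real[OF A sym this] ev show ?thesis by fastforce
  qed
  define c where "c = (A $$ (i,i) + \<kappa>) / 2"
  have c: "c > 0" "\<kappa> < c" "c < A $$ (i,i)" using gt k0 unfolding c_def by auto
  define A' where "A' = (1 / c) \<cdot>\<^sub>m A"
  have A': "A' \<in> carrier_mat n n" unfolding A'_def using A by simp
  have symA': "transpose_mat A' = A'"
  proof -
    have "A $$ (k,j) = A $$ (j,k)" if "j < n" "k < n" for j k
    proof -
      have "A $$ (k,j) = transpose_mat A $$ (j,k)" using A that by simp
      then show ?thesis using sym by simp
    qed
    then show ?thesis unfolding A'_def using A by (intro eq_matI) auto
  qed
  have evA': "0 \<le> r \<and> r < 1" if evr: "eigenvalue A' r" for r
  proof -
    obtain w where w: "w \<in> carrier_vec n" "w \<noteq> 0\<^sub>v n" "A' *\<^sub>v w = r \<cdot>\<^sub>v w"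
      using evr A' unfolding eigenvalue_def eigenvector_def by auto
    have "A *\<^sub>v w = (c * r) \<cdot>\<^sub>v w"
    proof (rule eq_vecI)
      fix j assume "j < dim_vec ((c * r) \<cdot>\<^sub>v w)"
      then have j: "j < n" using w by simp
      have "(A' *\<^sub>v w) $ j = r * w $ j" using w(3) j w(1) by (metis carrier_vecD index_smult_vec(1))
      moreover have "(A' *\<^sub>v w) $ j = (1/c) * (A *\<^sub>v w) $ j"
        unfolding A'_def using A j w(1) by (simp add: scalar_prod_def sum_distrib_left mult.assoc)
      ultimately show "(A *\<^sub>v w) $ j = ((c * r) \<cdot>\<^sub>v w) $ j" using c j w(1) by (auto simp: field_simps)
    qed (use A w in auto)
    then have "eigenvalue A (c * r)" unfolding eigenvalue_def eigenvector_def using A w by auto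
    from ev[OF this] have e: "0 \<le> c * r" "c * r \<le> \<kappa>" by auto
    have "0 \<le> r" using e(1) c(1) by (simp add: zero_le_mult_iff)
    moreover have "c * r < c * 1" using e(2) c(2) by simp
    then have "r < 1" using c(1) by (simp only: mult_less_cancel_left_pos)
    ultimately show ?thesis by simp
  qed
  let ?B = "map_mat complex_of_real A'"
  have B: "?B \<in> carrier_mat n n" using A' by simp
  have n0: "n > 0" using i by simp
  have "spectral_radius ?B < 1"
  proof -
    have fin: "finite (norm ` spectrum ?B)" using card_finite_spectrum(1)[OF B] by simp
    have ne: "norm ` spectrum ?B \<noteq> {}" using spectrum_non_empty[OF B n0] by simp
    have "\<forall>x \<in> norm ` spectrum ?B. x < 1"
    proof
      fix x assume "x \<in> norm ` spectrum ?B"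
      then obtain l where l: "eigenvalue ?B l" "x = norm l" unfolding spectrum_def by auto
      from complex_eig_real[OF A' symA' l(1)] evA' have "l = complex_of_real (Re l)" "0 \<le> Re l" "Re l < 1"
        by auto
      then show "x < 1" using l(2) by (metis norm_of_real abs_of_nonneg)
    qed
    then show ?thesis unfolding spectral_radius_def using Max_less_iff[OF fin ne] by blast
  qed
  from spectral_radius_jnf_norm_bound_less_1_upper_triangular[OF B this]
  obtain C where C: "\<And>k. norm_bound (?B ^\<^sub>m k) C" by auto
  define a where "a = A' $$ (i,i)"
  have a: "a > 1" unfolding a_def A'_def using A i c by (simp add: field_simps)
  have bnd: "a ^ (2 ^ Suc k) \<le> C" for k
  proof -
    have "a ^ (2 ^ Suc k) = \<bar>a\<bar> ^ (2 ^ Suc k)" using a by simp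
    also have "\<dots> \<le> (A' ^\<^sub>m (2 ^ Suc k)) $$ (i,i)" unfolding a_def by (rule diag_pow2[OF A' symA' i])
    also have "\<dots> \<le> norm ((?B ^\<^sub>m (2 ^ Suc k)) $$ (i,i))"
      using i A' by (simp add: of_real_hom.mat_hom_pow[OF A', symmetric])
    also have "\<dots> \<le> C" using C[of "2 ^ Suc k"] i B unfolding norm_bound_def by simp
    finally show ?thesis .
  qed
  obtain k :: nat where k: "real k > C / (a - 1)" using reals_Archimedean2 by blast
  have "1 + real (2 ^ Suc k) * (a - 1) \<le> a ^ (2 ^ Suc k)"
    using Bernoulli_inequality[of "a - 1" "2 ^ Suc k"] a by simp
  moreover have "real k \<le> real (2 ^ Suc k)"
  proof -
    have "k < 2 ^ k" by (rule less_exp)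
    also have "(2::nat) ^ k \<le> 2 ^ Suc k" by simp
    finally have "k \<le> 2 ^ Suc k" by simp
    then show ?thesis by (simp only: of_nat_le_iff)
  qed
  moreover have "C < real k * (a - 1)" using k a by (simp add: field_simps)
  ultimately have "C < a ^ (2 ^ Suc k)"
  proof -
    have "real k * (a - 1) \<le> real (2 ^ Suc k) * (a - 1)"
      using \<open>real k \<le> real (2 ^ Suc k)\<close> a by (intro mult_right_mono) auto
    then show ?thesis using \<open>C < real k * (a - 1)\<close> \<open>1 + real (2 ^ Suc k) * (a - 1) \<le> a ^ (2 ^ Suc k)\<close> by linarith
  qed
  with bnd[of k] show False by simp
qed

lemma blk_start_mono:
  assumes "t \<le> t'" shows "blk_start bs t \<le> blk_start bs t'"
proof -
  have "take t' bs = take t bs @ take (t' - t) (drop t bs)"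
    using assms by (metis le_add_diff_inverse take_add)
  then show ?thesis unfolding blk_start_def by simp
qed

lemma blk_start_Suc:
  assumes "t < length bs" shows "blk_start bs (Suc t) = blk_start bs t + bs ! t"
  using assms unfolding blk_start_def by (simp add: take_Suc_conv_app_nth)

lemma blk_unique:
  assumes "blk_start bs t \<le> i" "i < blk_start bs (Suc t)"
    and "blk_start bs t' \<le> i" "i < blk_start bs (Suc t')"
  shows "t = t'"
proof (rule ccontr)
  assume "t \<noteq> t'"
  then consider "Suc t \<le> t'" | "Suc t' \<le> t" by linarith
  then show False
  proof cases
    case 1 then show False using blk_start_mono[OF 1, of bs] assms by linarith
  next
    case 2 then show False using blk_start_mono[OF 2, of bs] assms by linarith
  qed
qed

lemma same_block_sym: "same_block bs i j = same_block bs j i"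
  unfolding same_block_def by blast

lemma card_same_block:
  assumes bm: "\<And>b. b \<in> set bs \<Longrightarrow> b \<le> m"
  shows "card {j \<in> {..<p}. same_block bs i j} \<le> m"
proof (cases "\<exists>j. same_block bs i j")
  case False
  then have e: "{j \<in> {..<p}. same_block bs i j} = {}" by auto
  show ?thesis by (subst e) simp
next
  case True
  then obtain j0 t where t: "t < length bs" "blk_start bs t \<le> i" "i < blk_start bs (Suc t)"
    unfolding same_block_def by blast
  have "{j \<in> {..<p}. same_block bs i j} \<subseteq> {blk_start bs t..<blk_start bs (Suc t)}"
  proof
    fix j assume "j \<in> {j \<in> {..<p}. same_block bs i j}"
    then obtain t' where t': "t' < length bs" "blk_start bs t' \<le> i" "i < blk_start bs (Suc t')"
      "blk_start bs t' \<le> j" "j < blk_start bs (Suc t')"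
      unfolding same_block_def by blast
    have "t' = t" using blk_unique[OF t'(2,3) t(2,3)] .
    then show "j \<in> {blk_start bs t..<blk_start bs (Suc t)}" using t' by simp
  qed
  then have "card {j \<in> {..<p}. same_block bs i j} \<le> card {blk_start bs t..<blk_start bs (Suc t)}"
    by (rule card_mono[rotated]) simp
  also have "\<dots> = bs ! t" using blk_start_Suc[OF t(1)] by simp
  also have "\<dots> \<le> m" using bm t(1) by simp
  finally show ?thesis .
qed

lemma vnorm_sq: "vnorm v = sqrt (\<Sum>i<dim_vec v. (v $ i)\<^sup>2)"
  unfolding vnorm_def scalar_prod_def by (simp add: power2_eq_square atLeast0LessThan)

lemma op_norm_le:
  fixes D :: "real mat"
  assumes D: "D \<in> carrier_mat p p"
    and off: "\<And>i j. i < p \<Longrightarrow> j < p \<Longrightarrow> \<not> same_block bs i j \<Longrightarrow> D $$ (i,j) = 0"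
    and bnd: "\<And>i j. i < p \<Longrightarrow> j < p \<Longrightarrow> \<bar>D $$ (i,j)\<bar> \<le> \<eta>"
    and bm: "\<And>b. b \<in> set bs \<Longrightarrow> b \<le> m"
    and eta: "\<eta> \<ge> 0"
  shows "op_norm D \<le> real m * \<eta>"
proof -
  define B where "B i = {j \<in> {..<p}. same_block bs i j}" for i
  have cB: "card (B i) \<le> m" for i unfolding B_def by (rule card_same_block[OF bm])
  have finB: "finite (B i)" for i unfolding B_def by simp
  have key: "vnorm (D *\<^sub>v v) \<le> real m * \<eta>" if v: "v \<in> carrier_vec p" "vnorm v \<le> 1" for v
  proof -
    have Dv: "(D *\<^sub>v v) $ i = (\<Sum>j\<in>B i. D $$ (i,j) * v $ j)" if i: "i < p" for i
    proof -
      have "(D *\<^sub>v v) $ i = (\<Sum>j<p. D $$ (i,j) * v $ j)"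
        using D v i by (simp add: scalar_prod_def atLeast0LessThan)
      also have "\<dots> = (\<Sum>j\<in>B i. D $$ (i,j) * v $ j)"
        by (rule sum.mono_neutral_right) (use off i in \<open>auto simp: B_def\<close>)
      finally show ?thesis .
    qed
    have sq: "((D *\<^sub>v v) $ i)\<^sup>2 \<le> real m * \<eta>\<^sup>2 * (\<Sum>j\<in>B i. (v $ j)\<^sup>2)" if i: "i < p" for i
    proof -
      have "((D *\<^sub>v v) $ i)\<^sup>2 \<le> (\<Sum>j\<in>B i. (D $$ (i,j) * v $ j)\<^sup>2) * card (B i)"
        unfolding Dv[OF i] by (rule sum_squared_le_sum_of_squares)
      also have "\<dots> \<le> (\<Sum>j\<in>B i. \<eta>\<^sup>2 * (v $ j)\<^sup>2) * real m"
      proof (rule mult_mono)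
        show "(\<Sum>j\<in>B i. (D $$ (i,j) * v $ j)\<^sup>2) \<le> (\<Sum>j\<in>B i. \<eta>\<^sup>2 * (v $ j)\<^sup>2)"
        proof (rule sum_mono)
          fix j assume "j \<in> B i"
          then have j: "j < p" by (simp add: B_def)
          have "\<bar>D $$ (i,j)\<bar>\<^sup>2 \<le> \<eta>\<^sup>2" using bnd[OF i j] by (intro power_mono) auto
          then show "(D $$ (i,j) * v $ j)\<^sup>2 \<le> \<eta>\<^sup>2 * (v $ j)\<^sup>2"
            by (simp add: power_mult_distrib mult_right_mono)
        qed
        show "real (card (B i)) \<le> real m" using cB by simp
      qed (auto intro: sum_nonneg)
      finally show ?thesis by (simp add: sum_distrib_left mult_ac)
    qed
    have "(\<Sum>i<p. ((D *\<^sub>v v) $ i)\<^sup>2) \<le> (\<Sum>i<p. real m * \<eta>\<^sup>2 * (\<Sum>j\<in>B i. (v $ j)\<^sup>2))"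
      by (rule sum_mono) (rule sq, simp)
    also have "\<dots> = real m * \<eta>\<^sup>2 * (\<Sum>i<p. \<Sum>j<p. (if same_block bs i j then (v $ j)\<^sup>2 else 0))"
    proof -
      have "(\<Sum>j\<in>B i. (v $ j)\<^sup>2) = (\<Sum>j<p. (if same_block bs i j then (v $ j)\<^sup>2 else 0))" for i
        unfolding B_def by (rule sum.inter_filter) simp
      then show ?thesis by (simp add: sum_distrib_left)
    qed
    also have "(\<Sum>i<p. \<Sum>j<p. (if same_block bs i j then (v $ j)\<^sup>2 else 0))
        = (\<Sum>j<p. \<Sum>i<p. (if same_block bs i j then (v $ j)\<^sup>2 else 0))"
      by (rule sum.swap)
    also have "\<dots> = (\<Sum>j<p. (v $ j)\<^sup>2 * card (B j))"
    proof (rule sum.cong[OF refl])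
      fix j
      have "(\<Sum>i<p. (if same_block bs i j then (v $ j)\<^sup>2 else 0)) = (\<Sum>i\<in>B j. (v $ j)\<^sup>2)"
        unfolding B_def by (simp add: sum.inter_filter[symmetric] same_block_sym)
      then show "(\<Sum>i<p. (if same_block bs i j then (v $ j)\<^sup>2 else 0)) = (v $ j)\<^sup>2 * card (B j)"
        by simp
    qed
    also have "\<dots> \<le> (\<Sum>j<p. (v $ j)\<^sup>2 * real m)"
      by (rule sum_mono) (use cB in \<open>auto intro: mult_left_mono\<close>)
    finally have R: "(\<Sum>i<p. ((D *\<^sub>v v) $ i)\<^sup>2) \<le> real m * \<eta>\<^sup>2 * ((\<Sum>j<p. (v $ j)\<^sup>2) * real m)"
      by (simp add: mult_left_mono sum_distrib_right)
    have S1: "(\<Sum>j<p. (v $ j)\<^sup>2) \<le> 1"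
    proof -
      have "sqrt (\<Sum>j<p. (v $ j)\<^sup>2) \<le> 1" using v by (simp add: vnorm_sq)
      then show ?thesis by simp
    qed
    have "real m * \<eta>\<^sup>2 * ((\<Sum>j<p. (v $ j)\<^sup>2) * real m) = (real m * \<eta>)\<^sup>2 * (\<Sum>j<p. (v $ j)\<^sup>2)"
      by (simp add: power2_eq_square mult_ac)
    also have "\<dots> \<le> (real m * \<eta>)\<^sup>2 * 1"
      by (rule mult_left_mono[OF S1]) simp
    finally have R2: "(\<Sum>i<p. ((D *\<^sub>v v) $ i)\<^sup>2) \<le> (real m * \<eta>)\<^sup>2" using R by simp
    have "sqrt (\<Sum>i<p. ((D *\<^sub>v v) $ i)\<^sup>2) \<le> sqrt ((real m * \<eta>)\<^sup>2)"
      by (rule real_sqrt_le_mono[OF R2])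
    also have "\<dots> = real m * \<eta>" using eta by simp
    finally have "sqrt (\<Sum>i<p. ((D *\<^sub>v v) $ i)\<^sup>2) \<le> real m * \<eta>" .
    then show ?thesis using D by (simp add: vnorm_sq)
  qed
  have ne: "{v \<in> carrier_vec (dim_col D). vnorm v \<le> 1} \<noteq> {}"
  proof -
    have "0\<^sub>v p \<in> {v \<in> carrier_vec (dim_col D). vnorm v \<le> 1}" using D by (simp add: vnorm_sq)
    then show ?thesis by blast
  qed
  show ?thesis unfolding op_norm_def
    by (rule cSUP_least[OF ne]) (use key D in auto)
qed

context prob_space
begin

lemma integrable_pow_le4:
  fixes f :: "'a \<Rightarrow> real"
  assumes f[measurable]: "f \<in> borel_measurable M" and i4: "integrable M (\<lambda>x. f x ^ 4)" and k: "k \<le> 4"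
  shows "integrable M (\<lambda>x. f x ^ k)"
proof (rule Bochner_Integration.integrable_bound)
  show "integrable M (\<lambda>x. 1 + f x ^ 4)" using i4 by simp
  show "(\<lambda>x. f x ^ k) \<in> borel_measurable M" by measurable
  show "AE x in M. norm (f x ^ k) \<le> norm (1 + f x ^ 4)"
  proof (rule AE_I2)
    fix x
    have "\<bar>f x\<bar> ^ k \<le> 1 + \<bar>f x\<bar> ^ 4"
    proof (cases "\<bar>f x\<bar> \<le> 1")
      case True
      then have "\<bar>f x\<bar> ^ k \<le> 1" by (simp add: power_le_one)
      moreover have "0 \<le> \<bar>f x\<bar> ^ 4" by simp
      ultimately show ?thesis by linarith
    next
      case False
      then have "\<bar>f x\<bar> ^ k \<le> \<bar>f x\<bar> ^ 4" by (intro power_increasing k) auto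
      then show ?thesis by simp
    qed
    moreover have "\<bar>f x\<bar> ^ 4 = f x ^ 4" by (simp add: power_abs[symmetric] power_even_abs)
    ultimately show "norm (f x ^ k) \<le> norm (1 + f x ^ 4)"
      by (simp add: power_abs)
  qed
qed

lemma indep_pow_prod:
  fixes X Y :: "'a \<Rightarrow> real"
  assumes ind: "indep_var borel X borel Y"
    and iX: "integrable M (\<lambda>x. X x ^ a)" and iY: "integrable M (\<lambda>x. Y x ^ b)"
  shows "integrable M (\<lambda>x. X x ^ a * Y x ^ b)"
    "expectation (\<lambda>x. X x ^ a * Y x ^ b) = expectation (\<lambda>x. X x ^ a) * expectation (\<lambda>x. Y x ^ b)"
proof -
  have "indep_var borel ((\<lambda>t. t ^ a) \<circ> X) borel ((\<lambda>t. t ^ b) \<circ> Y)"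
    by (rule indep_var_compose[OF ind]) auto
  then have ind': "indep_var borel (\<lambda>x. X x ^ a) borel (\<lambda>x. Y x ^ b)" by (simp add: comp_def)
  show "integrable M (\<lambda>x. X x ^ a * Y x ^ b)"
    by (rule indep_var_integrable[OF ind' iX iY])
  show "expectation (\<lambda>x. X x ^ a * Y x ^ b) = expectation (\<lambda>x. X x ^ a) * expectation (\<lambda>x. Y x ^ b)"
    by (rule indep_var_lebesgue_integral[OF ind' iX iY])
qed

lemma fourth_moment_sum:
  fixes W :: "'i \<Rightarrow> 'a \<Rightarrow> real"
  assumes fin: "finite I" and ind: "indep_vars (\<lambda>_. borel) W I"
    and i4: "\<And>i. i \<in> I \<Longrightarrow> integrable M (\<lambda>x. W i x ^ 4)"
    and m0: "\<And>i. i \<in> I \<Longrightarrow> expectation (W i) = 0"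
    and m2: "\<And>i. i \<in> I \<Longrightarrow> expectation (\<lambda>x. W i x ^ 2) \<le> B2"
    and m4: "\<And>i. i \<in> I \<Longrightarrow> expectation (\<lambda>x. W i x ^ 4) \<le> B4"
  shows "integrable M (\<lambda>x. (\<Sum>i\<in>I. W i x) ^ 4) \<and>
    expectation (\<lambda>x. (\<Sum>i\<in>I. W i x) ^ 4) \<le> real (card I) * B4 + 3 * (real (card I))\<^sup>2 * B2\<^sup>2 \<and>
    expectation (\<lambda>x. (\<Sum>i\<in>I. W i x)) = 0 \<and>
    expectation (\<lambda>x. (\<Sum>i\<in>I. W i x) ^ 2) \<le> real (card I) * B2"
  using fin ind i4 m0 m2 m4
proof (induction I rule: finite_induct)
  case empty
  then show ?case by simp
next
  case (insert a F)
  have indF: "indep_vars (\<lambda>_. borel) W F" using insert.prems(1) by (rule indep_vars_subset) auto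
  from insert.IH[OF indF] insert.prems
  have IH: "integrable M (\<lambda>x. (\<Sum>i\<in>F. W i x) ^ 4)"
    "expectation (\<lambda>x. (\<Sum>i\<in>F. W i x) ^ 4) \<le> real (card F) * B4 + 3 * (real (card F))\<^sup>2 * B2\<^sup>2"
    "expectation (\<lambda>x. (\<Sum>i\<in>F. W i x)) = 0"
    "expectation (\<lambda>x. (\<Sum>i\<in>F. W i x) ^ 2) \<le> real (card F) * B2"
    by auto
  define T where "T x = (\<Sum>i\<in>F. W i x)" for x
  define V where "V = W a"
  have rvW: "W i \<in> borel_measurable M" if "i \<in> insert a F" for i
    using insert.prems(1) that unfolding indep_vars_def by auto
  have Tm[measurable]: "T \<in> borel_measurable M" unfolding T_def using rvW by auto
  have Vm[measurable]: "V \<in> borel_measurable M" unfolding V_def using rvW by auto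
  have indVT: "indep_var borel V borel T"
  proof -
    have "indep_var borel (W a) borel (\<lambda>\<omega>. \<Sum>i\<in>F. W i \<omega>)"
      by (rule indep_vars_sum[OF insert.hyps(1,2) insert.prems(1)])
    then show "indep_var borel V borel T" unfolding V_def T_def by simp
  qed
  have iT: "integrable M (\<lambda>x. T x ^ k)" if "k \<le> 4" for k
    using integrable_pow_le4[OF Tm _ that] IH(1) unfolding T_def by simp
  have iV: "integrable M (\<lambda>x. V x ^ k)" if "k \<le> 4" for k
    using integrable_pow_le4[OF Vm _ that] insert.prems(2) unfolding V_def by simp
  have P: "integrable M (\<lambda>x. T x ^ a' * V x ^ b')"
    "expectation (\<lambda>x. T x ^ a' * V x ^ b') = expectation (\<lambda>x. T x ^ a') * expectation (\<lambda>x. V x ^ b')"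
    if "a' \<le> 4" "b' \<le> 4" for a' b'
    using indep_pow_prod[OF indVT iV[OF that(2)] iT[OF that(1)]] by (auto simp: mult.commute)
  have PI: "integrable M (\<lambda>x. T x ^ 4)" "integrable M (\<lambda>x. T x ^ 3 * V x)"
    "integrable M (\<lambda>x. T x ^ 2 * V x ^ 2)" "integrable M (\<lambda>x. T x * V x ^ 3)"
    "integrable M (\<lambda>x. V x ^ 4)" "integrable M (\<lambda>x. T x * V x)"
    "integrable M (\<lambda>x. T x ^ 2)" "integrable M (\<lambda>x. V x ^ 2)"
    using P(1)[of 4 0] P(1)[of 3 1] P(1)[of 2 2] P(1)[of 1 3] P(1)[of 0 4] P(1)[of 1 1]
      P(1)[of 2 0] P(1)[of 0 2] by simp_all
  have PE: "expectation (\<lambda>x. T x ^ 3 * V x) = expectation (\<lambda>x. T x ^ 3) * expectation V"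
    "expectation (\<lambda>x. T x ^ 2 * V x ^ 2) = expectation (\<lambda>x. T x ^ 2) * expectation (\<lambda>x. V x ^ 2)"
    "expectation (\<lambda>x. T x * V x ^ 3) = expectation T * expectation (\<lambda>x. V x ^ 3)"
    "expectation (\<lambda>x. T x * V x) = expectation T * expectation V"
    using P(2)[of 3 1] P(2)[of 2 2] P(2)[of 1 3] P(2)[of 1 1] by simp_all
  have ET: "expectation T = 0" using IH(3) unfolding T_def by simp
  have EV: "expectation V = 0" using insert.prems(3) unfolding V_def by simp
  have ET2: "expectation (\<lambda>x. T x ^ 2) \<le> real (card F) * B2" using IH(4) unfolding T_def by simp
  have ET4: "expectation (\<lambda>x. T x ^ 4) \<le> real (card F) * B4 + 3 * (real (card F))\<^sup>2 * B2\<^sup>2"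
    using IH(2) unfolding T_def by simp
  have EV2: "expectation (\<lambda>x. V x ^ 2) \<le> B2" using insert.prems(4) unfolding V_def by simp
  have EV4: "expectation (\<lambda>x. V x ^ 4) \<le> B4" using insert.prems(5) unfolding V_def by simp
  have ET2nn: "0 \<le> expectation (\<lambda>x. T x ^ 2)" by (rule integral_nonneg_AE) auto
  have EV2nn: "0 \<le> expectation (\<lambda>x. V x ^ 2)" by (rule integral_nonneg_AE) auto
  have B2nn: "0 \<le> B2" using EV2nn EV2 by linarith
  have sumeq: "(\<Sum>i\<in>insert a F. W i x) = T x + V x" for x
    using insert.hyps unfolding T_def V_def by simp
  have e4: "(T x + V x) ^ 4 = T x ^ 4 + 4 * (T x ^ 3 * V x) + 6 * (T x ^ 2 * V x ^ 2)
      + 4 * (T x * V x ^ 3) + V x ^ 4" for x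
    by (simp add: power2_eq_square power3_eq_cube power4_eq_xxxx algebra_simps eval_nat_numeral)
  have e2: "(T x + V x) ^ 2 = T x ^ 2 + 2 * (T x * V x) + V x ^ 2" for x
    by (simp add: power2_eq_square algebra_simps)
  have int4: "integrable M (\<lambda>x. (T x + V x) ^ 4)"
    unfolding e4 using PI by (intro Bochner_Integration.integrable_add Bochner_Integration.integrable_mult_right) auto
  have int2: "integrable M (\<lambda>x. (T x + V x) ^ 2)"
    unfolding e2 using PI by (intro Bochner_Integration.integrable_add Bochner_Integration.integrable_mult_right) auto
  have "expectation (\<lambda>x. (T x + V x) ^ 4) =
      expectation (\<lambda>x. T x ^ 4) + 4 * expectation (\<lambda>x. T x ^ 3 * V x)
      + 6 * expectation (\<lambda>x. T x ^ 2 * V x ^ 2)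
      + 4 * expectation (\<lambda>x. T x * V x ^ 3) + expectation (\<lambda>x. V x ^ 4)"
    unfolding e4 using PI by (simp add: Bochner_Integration.integral_add)
  also have "\<dots> = expectation (\<lambda>x. T x ^ 4) + 6 * (expectation (\<lambda>x. T x ^ 2) * expectation (\<lambda>x. V x ^ 2))
      + expectation (\<lambda>x. V x ^ 4)"
    using PE ET EV by simp
  also have "\<dots> \<le> (real (card F) * B4 + 3 * (real (card F))\<^sup>2 * B2\<^sup>2) + 6 * ((real (card F) * B2) * B2) + B4"
    using ET4 EV4 mult_mono[OF ET2 EV2 mult_nonneg_nonneg[OF of_nat_0_le_iff B2nn] EV2nn] B2nn by (intro add_mono mult_left_mono) auto
  also have "\<dots> \<le> real (card (insert a F)) * B4 + 3 * (real (card (insert a F)))\<^sup>2 * B2\<^sup>2"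
    using insert.hyps B2nn by (simp add: power2_eq_square algebra_simps)
  finally have r4: "expectation (\<lambda>x. (T x + V x) ^ 4) \<le> real (card (insert a F)) * B4 + 3 * (real (card (insert a F)))\<^sup>2 * B2\<^sup>2" .
  have "expectation (\<lambda>x. (T x + V x) ^ 2) =
      expectation (\<lambda>x. T x ^ 2) + 2 * expectation (\<lambda>x. T x * V x) + expectation (\<lambda>x. V x ^ 2)"
    unfolding e2 using PI by (simp add: Bochner_Integration.integral_add)
  also have "\<dots> = expectation (\<lambda>x. T x ^ 2) + expectation (\<lambda>x. V x ^ 2)"
    using PE ET EV by simp
  also have "\<dots> \<le> real (card (insert a F)) * B2"
    using ET2 EV2 insert.hyps by (simp add: algebra_simps)
  finally have r2: "expectation (\<lambda>x. (T x + V x) ^ 2) \<le> real (card (insert a F)) * B2" .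
  have r1: "expectation (\<lambda>x. T x + V x) = 0"
    using iT[of 1] iV[of 1] ET EV by (simp add: Bochner_Integration.integral_add)
  show ?case unfolding sumeq using int4 r4 r2 r1 by simp
qed

end

lemma exp_le_x_exp_sq: "exp (x::real) \<le> x + exp (x\<^sup>2)"
proof (cases "x \<ge> 1")
  case True
  then have "x \<le> x\<^sup>2" by (simp add: power2_eq_square)
  then have "exp x \<le> exp (x\<^sup>2)" by simp
  then show ?thesis using True by linarith
next
  case False
  show ?thesis
  proof (cases "x \<ge> 0")
    case True
    have "exp x \<le> 1 + x + x\<^sup>2" using exp_bound[OF True] False by simp
    also have "\<dots> \<le> x + exp (x\<^sup>2)" using exp_ge_add_one_self[of "x\<^sup>2"] by simp
    finally show ?thesis .
  next
    case neg: False
    have "exp x * (1 - x) \<le> exp x * exp (-x)"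
      using exp_ge_add_one_self[of "-x"] by (intro mult_left_mono) auto
    also have "\<dots> = 1" by (simp add: exp_minus)
    finally have "exp x * (1 - x) \<le> 1" .
    moreover have "1 \<le> (1 + x + x\<^sup>2) * (1 - x)"
    proof -
      have "(1 + x + x\<^sup>2) * (1 - x) = 1 - x ^ 3" by (simp add: algebra_simps power2_eq_square power3_eq_cube)
      moreover have "x ^ 3 \<le> 0"
      proof -
        have "0 \<le> x * x" by simp
        then have "(x * x) * x \<le> 0" using neg by (intro mult_nonneg_nonpos) auto
        then show ?thesis by (simp add: power3_eq_cube)
      qed
      ultimately show ?thesis by simp
    qed
    ultimately have "exp x * (1 - x) \<le> (1 + x + x\<^sup>2) * (1 - x)" by linarith
    then have "exp x \<le> 1 + x + x\<^sup>2" using neg by (simp add: mult_le_cancel_right)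
    also have "\<dots> \<le> x + exp (x\<^sup>2)" using exp_ge_add_one_self[of "x\<^sup>2"] by simp
    finally show ?thesis .
  qed
qed

lemma exp_ge_pow_fact:
  assumes "(y::real) \<ge> 0" shows "y ^ k / fact k \<le> exp y"
proof -
  have "(\<Sum>n\<in>{k}. y ^ n / fact n) \<le> (\<Sum>n. y ^ n / fact n)"
    using assms summable_exp_generic[of y]
    by (intro sum_le_suminf) (auto simp: divide_inverse ac_simps)
  also have "(\<Sum>n. y ^ n / fact n) = exp y"
    by (simp add: exp_def divide_inverse ac_simps)
  finally show ?thesis by simp
qed

lemma pow8_le_exp:
  assumes u: "(u::real) > 0"
  shows "x ^ 8 \<le> fact 8 / u ^ 8 * (exp (u * x) + exp (- (u * x)))"
proof -
  have "\<bar>u * x\<bar> ^ 8 / fact 8 \<le> exp \<bar>u * x\<bar>" by (rule exp_ge_pow_fact) simp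
  also have "exp \<bar>u * x\<bar> \<le> exp (u * x) + exp (- (u * x))"
    by (cases "u * x \<ge> 0") auto
  finally have "\<bar>u * x\<bar> ^ 8 \<le> fact 8 * (exp (u * x) + exp (- (u * x)))"
    by (simp add: divide_le_eq mult.commute)
  moreover have "\<bar>u * x\<bar> ^ 8 = u ^ 8 * x ^ 8"
    by (simp add: power_mult_distrib power_even_abs)
  ultimately have "u ^ 8 * x ^ 8 \<le> fact 8 * (exp (u * x) + exp (- (u * x)))" by simp
  then show ?thesis using u by (simp add: field_simps)
qed

context prob_space
begin

lemma subg_mgf:
  fixes Z :: "'a \<Rightarrow> real"
  assumes Zm[measurable]: "Z \<in> borel_measurable M" and iZ: "integrable M Z"
    and EZ: "expectation Z = 0" and K: "K > 0" and sg: "subgaussian_norm_le M Z K"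
  shows "integrable M (\<lambda>x. exp (t * Z x))" "expectation (\<lambda>x. exp (t * Z x)) \<le> exp (t\<^sup>2 * K\<^sup>2)"
proof -
  define Y where "Y x = (Z x)\<^sup>2 / K\<^sup>2" for x
  have Ym[measurable]: "Y \<in> borel_measurable M" unfolding Y_def by measurable
  have Ynn: "Y x \<ge> 0" for x unfolding Y_def by simp
  have nnY: "(\<integral>\<^sup>+ x. ennreal (exp (Y x)) \<partial>M) \<le> 2"
    using sg unfolding subgaussian_norm_le_def Y_def .
  have iY: "integrable M (\<lambda>x. exp (Y x))"
  proof (rule integrableI_bounded)
    show "(\<lambda>x. exp (Y x)) \<in> borel_measurable M" by measurable
    have "(\<integral>\<^sup>+ x. ennreal (norm (exp (Y x))) \<partial>M) \<le> 2" using nnY by simp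
    also have "(2::ennreal) < \<infinity>" by simp
    finally show "(\<integral>\<^sup>+ x. ennreal (norm (exp (Y x))) \<partial>M) < \<infinity>" .
  qed
  have EY: "expectation (\<lambda>x. exp (Y x)) \<le> 2"
  proof -
    have "ennreal (expectation (\<lambda>x. exp (Y x))) = (\<integral>\<^sup>+ x. ennreal (exp (Y x)) \<partial>M)"
      by (rule nn_integral_eq_integral[symmetric]) (use iY in auto)
    then have "ennreal (expectation (\<lambda>x. exp (Y x))) \<le> ennreal 2" using nnY by (simp only: ennreal_numeral)
    then show ?thesis by (subst (asm) ennreal_le_iff) auto
  qed
  define a where "a = t\<^sup>2 * K\<^sup>2"
  have a0: "a \<ge> 0" unfolding a_def by simp
  have tz: "t * Z x \<le> a / 2 + Y x / 2" for x
  proof -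
    have "0 \<le> (t * K - Z x / K)\<^sup>2" by simp
    also have "(t * K - Z x / K)\<^sup>2 = a - 2 * (t * Z x) + Y x"
      unfolding a_def Y_def using K by (simp add: power2_eq_square field_simps)
    finally show ?thesis by simp
  qed
  have gen: "exp (t * Z x) \<le> exp (a / 2) * ((1 + exp (Y x)) / 2)" for x
  proof -
    have "exp (t * Z x) \<le> exp (a / 2 + Y x / 2)" using tz by simp
    also have "\<dots> = exp (a / 2) * exp (Y x / 2)" by (simp add: exp_add)
    also have "exp (Y x / 2) \<le> (1 + exp (Y x)) / 2"
    proof -
      have "0 \<le> (1 - exp (Y x / 2))\<^sup>2" by simp
      also have "(1 - exp (Y x / 2))\<^sup>2 = 1 - 2 * exp (Y x / 2) + exp (Y x)"
        by (simp add: power2_eq_square algebra_simps exp_add[symmetric])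
      finally show ?thesis by simp
    qed
    then have "exp (a / 2) * exp (Y x / 2) \<le> exp (a / 2) * ((1 + exp (Y x)) / 2)" by simp
    finally show ?thesis .
  qed
  have ig: "integrable M (\<lambda>x. exp (a / 2) * ((1 + exp (Y x)) / 2))" using iY by simp
  show iE: "integrable M (\<lambda>x. exp (t * Z x))"
  proof (rule Bochner_Integration.integrable_bound[OF ig])
    show "(\<lambda>x. exp (t * Z x)) \<in> borel_measurable M" by measurable
    show "AE x in M. norm (exp (t * Z x)) \<le> norm (exp (a / 2) * ((1 + exp (Y x)) / 2))"
      using gen by (auto intro!: AE_I2 simp: abs_of_nonneg add_nonneg_nonneg)
  qed
  show "expectation (\<lambda>x. exp (t * Z x)) \<le> exp (t\<^sup>2 * K\<^sup>2)"
  proof (cases "a \<le> 1")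
    case True
    have pt: "exp (t * Z x) \<le> t * Z x + ((1 - a) + a * exp (Y x))" for x
    proof -
      have "exp (t * Z x) \<le> t * Z x + exp ((t * Z x)\<^sup>2)" by (rule exp_le_x_exp_sq)
      also have "(t * Z x)\<^sup>2 = (1 - a) *\<^sub>R 0 + a *\<^sub>R Y x"
        unfolding a_def Y_def using K by (simp add: power2_eq_square field_simps)
      also have "exp ((1 - a) *\<^sub>R 0 + a *\<^sub>R Y x) \<le> (1 - a) * exp 0 + a * exp (Y x)"
        by (rule convex_onD[OF exp_convex]) (use True a0 in auto)
      finally show ?thesis by simp
    qed
    have "expectation (\<lambda>x. exp (t * Z x)) \<le> expectation (\<lambda>x. t * Z x + ((1 - a) + a * exp (Y x)))"
      by (rule integral_mono[OF iE _ pt]) (use iZ iY in simp)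
    also have "\<dots> = t * expectation Z + ((1 - a) + a * expectation (\<lambda>x. exp (Y x)))"
      using iZ iY prob_space by (simp add: Bochner_Integration.integral_add)
    also have "\<dots> \<le> 0 + ((1 - a) + a * 2)"
      using EZ mult_left_mono[OF EY a0] by simp
    also have "\<dots> = 1 + a" by simp
    also have "\<dots> \<le> exp a" by (rule exp_ge_add_one_self)
    finally show ?thesis unfolding a_def .
  next
    case False
    have "expectation (\<lambda>x. exp (t * Z x)) \<le> expectation (\<lambda>x. exp (a / 2) * ((1 + exp (Y x)) / 2))"
      by (rule integral_mono[OF iE ig gen])
    also have "\<dots> = exp (a / 2) * ((1 + expectation (\<lambda>x. exp (Y x))) / 2)"
      using iY prob_space by (simp add: Bochner_Integration.integral_add)
    also have "\<dots> \<le> exp (a / 2) * ((1 + 2) / 2)"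
      using EY by (intro mult_left_mono) auto
    also have "\<dots> \<le> exp (a / 2) * exp (1 / 2)"
      using exp_ge_add_one_self[of "1/2"] by (intro mult_left_mono) auto
    also have "\<dots> \<le> exp (a / 2) * exp (a / 2)"
      using False by (intro mult_left_mono) auto
    also have "\<dots> = exp a" by (simp add: exp_add[symmetric])
    finally show ?thesis unfolding a_def .
  qed
qed

end

context prob_space
begin

lemma mgf_lin:
  fixes z :: "'i \<Rightarrow> 'a \<Rightarrow> real"
  assumes ind: "indep_vars (\<lambda>_. borel) z I" and fin: "finite I"
    and iz: "\<And>k. k \<in> I \<Longrightarrow> integrable M (z k)"
    and Ez: "\<And>k. k \<in> I \<Longrightarrow> expectation (z k) = 0"
    and sg: "\<And>k. k \<in> I \<Longrightarrow> subgaussian_norm_le M (z k) K"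
    and K: "K > 0"
  shows "(\<integral>\<^sup>+ x. ennreal (exp (t * (\<Sum>k\<in>I. c k * z k x))) \<partial>M)
    \<le> ennreal (exp (t\<^sup>2 * K\<^sup>2 * (\<Sum>k\<in>I. (c k)\<^sup>2)))"
proof -
  have zm: "z k \<in> borel_measurable M" if "k \<in> I" for k
    using ind that unfolding indep_vars_def by auto
  have ind': "indep_vars (\<lambda>_. borel) (\<lambda>k x. ennreal (exp (t * c k * z k x))) I"
    by (rule indep_vars_compose2[OF ind]) auto
  have "(\<integral>\<^sup>+ x. ennreal (exp (t * (\<Sum>k\<in>I. c k * z k x))) \<partial>M)
      = (\<integral>\<^sup>+ x. (\<Prod>k\<in>I. ennreal (exp (t * c k * z k x))) \<partial>M)"
    using fin by (simp add: sum_distrib_left exp_sum mult.assoc prod_ennreal)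
  also have "\<dots> = (\<Prod>k\<in>I. \<integral>\<^sup>+ x. ennreal (exp (t * c k * z k x)) \<partial>M)"
    by (rule indep_vars_nn_integral[OF fin ind']) simp
  also have "\<dots> \<le> (\<Prod>k\<in>I. ennreal (exp ((t * c k)\<^sup>2 * K\<^sup>2)))"
  proof (rule prod_mono_ennreal)
    fix k assume k: "k \<in> I"
    have i: "integrable M (\<lambda>x. exp ((t * c k) * z k x))"
      and e: "expectation (\<lambda>x. exp ((t * c k) * z k x)) \<le> exp ((t * c k)\<^sup>2 * K\<^sup>2)"
      using subg_mgf[OF zm[OF k] iz[OF k] Ez[OF k] K sg[OF k]] by auto
    have "(\<integral>\<^sup>+ x. ennreal (exp (t * c k * z k x)) \<partial>M) = ennreal (expectation (\<lambda>x. exp ((t * c k) * z k x)))"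
      by (rule nn_integral_eq_integral) (use i in auto)
    also have "\<dots> \<le> ennreal (exp ((t * c k)\<^sup>2 * K\<^sup>2))" using e by simp
    finally show "(\<integral>\<^sup>+ x. ennreal (exp (t * c k * z k x)) \<partial>M) \<le> ennreal (exp ((t * c k)\<^sup>2 * K\<^sup>2))" .
  qed
  also have "\<dots> = ennreal (\<Prod>k\<in>I. exp ((t * c k)\<^sup>2 * K\<^sup>2))"
    by (rule prod_ennreal) simp
  also have "(\<Prod>k\<in>I. exp ((t * c k)\<^sup>2 * K\<^sup>2)) = exp (t\<^sup>2 * K\<^sup>2 * (\<Sum>k\<in>I. (c k)\<^sup>2))"
    using fin by (simp add: exp_sum sum_distrib_left power_mult_distrib mult_ac)
  finally show ?thesis .
qed

lemma mom8_lin: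
  fixes z :: "'i \<Rightarrow> 'a \<Rightarrow> real"
  assumes ind: "indep_vars (\<lambda>_. borel) z I" and fin: "finite I"
    and iz: "\<And>k. k \<in> I \<Longrightarrow> integrable M (z k)"
    and Ez: "\<And>k. k \<in> I \<Longrightarrow> expectation (z k) = 0"
    and sg: "\<And>k. k \<in> I \<Longrightarrow> subgaussian_norm_le M (z k) K"
    and K: "K > 0" and kap: "\<kappa> > 0" and s: "(\<Sum>k\<in>I. (c k)\<^sup>2) \<le> \<kappa>"
  shows "integrable M (\<lambda>x. (\<Sum>k\<in>I. c k * z k x) ^ 8)"
    "expectation (\<lambda>x. (\<Sum>k\<in>I. c k * z k x) ^ 8) \<le> 2 * exp 1 * fact 8 * (K\<^sup>2 * \<kappa>) ^ 4"
proof -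
  have zm: "z k \<in> borel_measurable M" if "k \<in> I" for k
    using ind that unfolding indep_vars_def by auto
  define X where "X x = (\<Sum>k\<in>I. c k * z k x)" for x
  have Xm[measurable]: "X \<in> borel_measurable M" unfolding X_def using zm by auto
  define u where "u = 1 / (K * sqrt \<kappa>)"
  have u: "u > 0" unfolding u_def using K kap by simp
  have u2: "u\<^sup>2 * K\<^sup>2 = 1 / \<kappa>" unfolding u_def using K kap by (simp add: power2_eq_square field_simps)
  have u8: "fact 8 / u ^ 8 = fact 8 * (K\<^sup>2 * \<kappa>) ^ 4"
  proof -
    have "u ^ 8 = (u\<^sup>2) ^ 4" by (simp add: power_mult[symmetric])
    also have "u\<^sup>2 = 1 / (K\<^sup>2 * \<kappa>)" unfolding u_def using K kap by (simp add: power2_eq_square)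
    finally show ?thesis by (simp add: power_one_over)
  qed
  define C where "C = fact 8 / u ^ 8"
  have C0: "C \<ge> 0" unfolding C_def using u by simp
  have es: "exp (t\<^sup>2 * K\<^sup>2 * (\<Sum>k\<in>I. (c k)\<^sup>2)) \<le> exp 1" if "t\<^sup>2 = u\<^sup>2" for t
  proof -
    have "t\<^sup>2 * K\<^sup>2 * (\<Sum>k\<in>I. (c k)\<^sup>2) = (\<Sum>k\<in>I. (c k)\<^sup>2) / \<kappa>" using that u2 by simp
    also have "\<dots> \<le> 1" using s kap by simp
    finally show ?thesis by simp
  qed
  have m1: "(\<integral>\<^sup>+ x. ennreal (exp (u * X x)) \<partial>M) \<le> ennreal (exp 1)"
  proof -
    have "ennreal (exp (u\<^sup>2 * K\<^sup>2 * (\<Sum>k\<in>I. (c k)\<^sup>2))) \<le> ennreal (exp 1)"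
      using es[of u] by (intro ennreal_leI) simp
    then show ?thesis using mgf_lin[OF ind fin iz Ez sg K, of u c] unfolding X_def by (rule order_trans[rotated])
  qed
  have m2: "(\<integral>\<^sup>+ x. ennreal (exp (- (u * X x))) \<partial>M) \<le> ennreal (exp 1)"
  proof -
    have ineq: "ennreal (exp ((-u)\<^sup>2 * K\<^sup>2 * (\<Sum>k\<in>I. (c k)\<^sup>2))) \<le> ennreal (exp 1)"
      using es[of "-u"] by (intro ennreal_leI) simp
    have eq: "(\<integral>\<^sup>+ x. ennreal (exp (- (u * X x))) \<partial>M) = (\<integral>\<^sup>+ x. ennreal (exp ((-u) * (\<Sum>k\<in>I. c k * z k x))) \<partial>M)"
      unfolding X_def by simp
    show ?thesis unfolding eq by (rule order_trans[OF mgf_lin[OF ind fin iz Ez sg K, of "-u" c] ineq])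
  qed
  have "(\<integral>\<^sup>+ x. ennreal (X x ^ 8) \<partial>M) \<le> (\<integral>\<^sup>+ x. ennreal (C * (exp (u * X x) + exp (- (u * X x)))) \<partial>M)"
    using pow8_le_exp[OF u] unfolding C_def by (intro nn_integral_mono) (simp add: ennreal_leI)
  also have "\<dots> = ennreal C * ((\<integral>\<^sup>+ x. ennreal (exp (u * X x)) \<partial>M) + (\<integral>\<^sup>+ x. ennreal (exp (- (u * X x))) \<partial>M))"
    using C0 by (simp add: ennreal_mult nn_integral_cmult nn_integral_add)
  also have "\<dots> \<le> ennreal C * (ennreal (exp 1) + ennreal (exp 1))"
    by (intro mult_left_mono add_mono m1 m2) simp
  also have "\<dots> = ennreal (2 * exp 1 * fact 8 * (K\<^sup>2 * \<kappa>) ^ 4)"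
    using C0 u8 unfolding C_def by (simp add: ennreal_mult[symmetric] ennreal_plus[symmetric] del: ennreal_plus)
  finally have nn: "(\<integral>\<^sup>+ x. ennreal (X x ^ 8) \<partial>M) \<le> ennreal (2 * exp 1 * fact 8 * (K\<^sup>2 * \<kappa>) ^ 4)" .
  have iX: "integrable M (\<lambda>x. X x ^ 8)"
  proof (rule integrableI_bounded)
    show "(\<lambda>x. X x ^ 8) \<in> borel_measurable M" by measurable
    have "(\<integral>\<^sup>+ x. ennreal (norm (X x ^ 8)) \<partial>M) = (\<integral>\<^sup>+ x. ennreal (X x ^ 8) \<partial>M)"
      by (simp add: power_even_abs)
    also have "\<dots> < \<infinity>" using nn by (simp add: le_less_trans)
    finally show "(\<integral>\<^sup>+ x. ennreal (norm (X x ^ 8)) \<partial>M) < \<infinity>" .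
  qed
  then show "integrable M (\<lambda>x. (\<Sum>k\<in>I. c k * z k x) ^ 8)" unfolding X_def .
  have "ennreal (expectation (\<lambda>x. X x ^ 8)) = (\<integral>\<^sup>+ x. ennreal (X x ^ 8) \<partial>M)"
    by (rule nn_integral_eq_integral[symmetric]) (use iX in \<open>auto simp: power_even_abs\<close>)
  then have "ennreal (expectation (\<lambda>x. X x ^ 8)) \<le> ennreal (2 * exp 1 * fact 8 * (K\<^sup>2 * \<kappa>) ^ 4)"
    using nn by simp
  then show "expectation (\<lambda>x. (\<Sum>k\<in>I. c k * z k x) ^ 8) \<le> 2 * exp 1 * fact 8 * (K\<^sup>2 * \<kappa>) ^ 4"
  proof -
    have bnn: "0 \<le> 2 * exp 1 * fact 8 * (K\<^sup>2 * \<kappa>) ^ 4" using kap by simp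
    show ?thesis using \<open>ennreal (expectation (\<lambda>x. X x ^ 8)) \<le> ennreal (2 * exp 1 * fact 8 * (K\<^sup>2 * \<kappa>) ^ 4)\<close>
      unfolding X_def by (subst (asm) ennreal_le_iff[OF bnn])
  qed
qed

end

lemma sum_pair_singleton:
  "(\<Sum>q\<in>{l} \<times> A. f q) = (\<Sum>k\<in>A. f (l, k))"
proof -
  have "{l} \<times> A = (\<lambda>k. (l, k)) ` A" by auto
  moreover have "inj_on (\<lambda>k. (l, k)) A" by (auto simp: inj_on_def)
  ultimately show ?thesis by (simp add: sum.reindex)
qed

context prob_space
begin

lemma row_mom8:
  fixes z :: "nat \<Rightarrow> nat \<Rightarrow> 'a \<Rightarrow> real" and c :: "nat \<Rightarrow> real"
  assumes indep: "indep_vars (\<lambda>_. borel) (\<lambda>(i, j). z i j) ({..<N} \<times> {..<q})"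
    and iz: "\<And>i j. i < N \<Longrightarrow> j < q \<Longrightarrow> integrable M (z i j)"
    and Ez: "\<And>i j. i < N \<Longrightarrow> j < q \<Longrightarrow> expectation (z i j) = 0"
    and sg: "\<And>i j. i < N \<Longrightarrow> j < q \<Longrightarrow> subgaussian_norm_le M (z i j) K"
    and K: "K > 0" and kap: "\<kappa> > 0" and s: "(\<Sum>k<q. (c k)\<^sup>2) \<le> \<kappa>" and l: "l < N"
  shows "integrable M (\<lambda>x. (\<Sum>k<q. c k * z l k x) ^ 8)"
    "expectation (\<lambda>x. (\<Sum>k<q. c k * z l k x) ^ 8) \<le> 2 * exp 1 * fact 8 * (K\<^sup>2 * \<kappa>) ^ 4"
proof -
  let ?I = "{l} \<times> {..<q}"
  have ind: "indep_vars (\<lambda>_. borel) (\<lambda>(i, j). z i j) ?I"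
    by (rule indep_vars_subset[OF indep]) (use l in auto)
  have s': "(\<Sum>qq\<in>?I. (c (snd qq))\<^sup>2) \<le> \<kappa>" using s by (simp add: sum_pair_singleton)
  note r = mom8_lin[OF ind _ _ _ _ K kap s']
  have r1: "integrable M (\<lambda>x. (\<Sum>qq\<in>?I. c (snd qq) * (case qq of (i, j) \<Rightarrow> z i j) x) ^ 8)"
    by (rule r(1)) (use iz Ez sg l in auto)
  have r2: "expectation (\<lambda>x. (\<Sum>qq\<in>?I. c (snd qq) * (case qq of (i, j) \<Rightarrow> z i j) x) ^ 8)
      \<le> 2 * exp 1 * fact 8 * (K\<^sup>2 * \<kappa>) ^ 4"
    by (rule r(2)) (use iz Ez sg l in auto)
  have eq: "(\<Sum>qq\<in>?I. c (snd qq) * (case qq of (i, j) \<Rightarrow> z i j) x) = (\<Sum>k<q. c k * z l k x)" for x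
    by (simp add: sum_pair_singleton)
  show "integrable M (\<lambda>x. (\<Sum>k<q. c k * z l k x) ^ 8)" using r1 unfolding eq .
  show "expectation (\<lambda>x. (\<Sum>k<q. c k * z l k x) ^ 8) \<le> 2 * exp 1 * fact 8 * (K\<^sup>2 * \<kappa>) ^ 4"
    using r2 unfolding eq .
qed

lemma cross_moment:
  fixes z :: "nat \<Rightarrow> nat \<Rightarrow> 'a \<Rightarrow> real" and a b :: "nat \<Rightarrow> real"
  assumes indep: "indep_vars (\<lambda>_. borel) (\<lambda>(i, j). z i j) ({..<N} \<times> {..<q})"
    and iz: "\<And>i j. i < N \<Longrightarrow> j < q \<Longrightarrow> integrable M (z i j)"
    and Ez: "\<And>i j. i < N \<Longrightarrow> j < q \<Longrightarrow> expectation (z i j) = 0"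
    and iz2: "\<And>i j. i < N \<Longrightarrow> j < q \<Longrightarrow> integrable M (\<lambda>x. (z i j x)\<^sup>2)"
    and Ez2: "\<And>i j. i < N \<Longrightarrow> j < q \<Longrightarrow> expectation (\<lambda>x. (z i j x)\<^sup>2) = 1"
    and l: "l < N"
  shows "integrable M (\<lambda>x. (\<Sum>k<q. a k * z l k x) * (\<Sum>k<q. b k * z l k x))"
    "expectation (\<lambda>x. (\<Sum>k<q. a k * z l k x) * (\<Sum>k<q. b k * z l k x)) = (\<Sum>k<q. a k * b k)"
proof -
  have zm: "z l k \<in> borel_measurable M" if "k < q" for k
    using iz[OF l that] by auto
  have ip: "integrable M (\<lambda>x. z l k x * z l k' x)" if "k < q" "k' < q" for k k'
  proof (rule Bochner_Integration.integrable_bound)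
    show "integrable M (\<lambda>x. (z l k x)\<^sup>2 + (z l k' x)\<^sup>2)" using iz2 l that by auto
    show "(\<lambda>x. z l k x * z l k' x) \<in> borel_measurable M" using that by (intro borel_measurable_times zm)
    show "AE x in M. norm (z l k x * z l k' x) \<le> norm ((z l k x)\<^sup>2 + (z l k' x)\<^sup>2)"
    proof (rule AE_I2)
      fix x
      have "2 * \<bar>z l k x\<bar> * \<bar>z l k' x\<bar> \<le> (z l k x)\<^sup>2 + (z l k' x)\<^sup>2"
        using sum_squares_bound[of "\<bar>z l k x\<bar>" "\<bar>z l k' x\<bar>"] by (simp add: power2_eq_square)
      moreover have "\<bar>z l k x\<bar> * \<bar>z l k' x\<bar> \<ge> 0" by simp
      ultimately have "\<bar>z l k x\<bar> * \<bar>z l k' x\<bar> \<le> (z l k x)\<^sup>2 + (z l k' x)\<^sup>2" by linarith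
      then show "norm (z l k x * z l k' x) \<le> norm ((z l k x)\<^sup>2 + (z l k' x)\<^sup>2)"
        by (simp add: abs_mult)
    qed
  qed
  have Ep: "expectation (\<lambda>x. z l k x * z l k' x) = (if k = k' then 1 else 0)" if "k < q" "k' < q" for k k'
  proof (cases "k = k'")
    case True
    then show ?thesis using Ez2[OF l that(1)] by (simp add: power2_eq_square)
  next
    case False
    let ?J = "{(l, k), (l, k')}"
    have ind: "indep_vars (\<lambda>_. borel) (\<lambda>(i, j). z i j) ?J"
      by (rule indep_vars_subset[OF indep]) (use l that in auto)
    have "expectation (\<lambda>x. \<Prod>qq\<in>?J. (case qq of (i, j) \<Rightarrow> z i j) x) = (\<Prod>qq\<in>?J. expectation ((case qq of (i, j) \<Rightarrow> z i j)))"
      by (rule indep_vars_lebesgue_integral[OF _ ind]) (use iz l that in auto)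
    then show ?thesis using False Ez[OF l that(1)] by simp
  qed
  have eq: "(\<Sum>k<q. a k * z l k x) * (\<Sum>k<q. b k * z l k x) = (\<Sum>k<q. \<Sum>k'<q. a k * b k' * (z l k x * z l k' x))" for x
    by (simp add: sum_product mult_ac)
  show "integrable M (\<lambda>x. (\<Sum>k<q. a k * z l k x) * (\<Sum>k<q. b k * z l k x))"
    unfolding eq by (intro Bochner_Integration.integrable_sum Bochner_Integration.integrable_mult_right ip) auto
  have "expectation (\<lambda>x. (\<Sum>k<q. a k * z l k x) * (\<Sum>k<q. b k * z l k x))
      = (\<Sum>k<q. \<Sum>k'<q. a k * b k' * expectation (\<lambda>x. z l k x * z l k' x))"
  proof -
    have ipk: "integrable M (\<lambda>x. a k * b k' * (z l k x * z l k' x))" if "k < q" "k' < q" for k k'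
      using ip[OF that] by simp
    have inner: "expectation (\<lambda>x. \<Sum>k'<q. a k * b k' * (z l k x * z l k' x))
        = (\<Sum>k'<q. a k * b k' * expectation (\<lambda>x. z l k x * z l k' x))" if k: "k < q" for k
      by (subst Bochner_Integration.integral_sum) (use ipk k in auto)
    have "expectation (\<lambda>x. \<Sum>k<q. \<Sum>k'<q. a k * b k' * (z l k x * z l k' x))
        = (\<Sum>k<q. expectation (\<lambda>x. \<Sum>k'<q. a k * b k' * (z l k x * z l k' x)))"
      by (subst Bochner_Integration.integral_sum) (use ipk in \<open>auto intro!: Bochner_Integration.integrable_sum\<close>)
    also have "\<dots> = (\<Sum>k<q. \<Sum>k'<q. a k * b k' * expectation (\<lambda>x. z l k x * z l k' x))"
      using inner by (intro sum.cong) auto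
    finally show ?thesis unfolding eq .
  qed
  also have "\<dots> = (\<Sum>k<q. \<Sum>k'<q. a k * b k' * (if k = k' then 1 else 0))"
    using Ep by (intro sum.cong refl) auto
  also have "\<dots> = (\<Sum>k<q. a k * b k)"
    by (simp add: if_distrib cong: if_cong)
  finally show "expectation (\<lambda>x. (\<Sum>k<q. a k * z l k x) * (\<Sum>k<q. b k * z l k x)) = (\<Sum>k<q. a k * b k)" .
qed

end

definition C8c :: "real \<Rightarrow> real \<Rightarrow> real" where
  "C8c \<kappa> K = 2 * exp 1 * fact 8 * (K\<^sup>2 * \<kappa>) ^ 4"
definition B4c :: "real \<Rightarrow> real \<Rightarrow> real" where
  "B4c \<kappa> K = 8 * C8c \<kappa> K + 8 * \<kappa> ^ 4"
definition cstc :: "real \<Rightarrow> real \<Rightarrow> real" where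
  "cstc \<kappa> K = B4c \<kappa> K + 3 * (1 + B4c \<kappa> K)\<^sup>2"

lemma pow4_diff_le: "((a::real) - c) ^ 4 \<le> 8 * (a ^ 4 + c ^ 4)"
proof -
  have "(a - c)\<^sup>2 \<le> 2 * (a\<^sup>2 + c\<^sup>2)"
    using sum_squares_bound[of a "-c"] by (simp add: power2_eq_square algebra_simps)
  then have "((a - c)\<^sup>2)\<^sup>2 \<le> (2 * (a\<^sup>2 + c\<^sup>2))\<^sup>2" by (intro power_mono) auto
  also have "\<dots> = 4 * (a\<^sup>2 + c\<^sup>2)\<^sup>2" by (simp add: power2_eq_square algebra_simps)
  also have "(a\<^sup>2 + c\<^sup>2)\<^sup>2 \<le> 2 * (a ^ 4 + c ^ 4)"
    using sum_squares_bound[of "a\<^sup>2" "c\<^sup>2"] by (simp add: power2_eq_square algebra_simps eval_nat_numeral)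
  finally show ?thesis by (simp add: power_mult[symmetric])
qed

lemma prod4_le: "((x::real) * y) ^ 4 \<le> (x ^ 8 + y ^ 8) / 2"
proof -
  have "0 \<le> (x ^ 4 - y ^ 4)\<^sup>2" by simp
  then have "2 * (x ^ 4 * y ^ 4) \<le> (x ^ 4)\<^sup>2 + (y ^ 4)\<^sup>2" by (simp add: power2_eq_square algebra_simps)
  then show ?thesis by (simp add: power_mult_distrib power_mult[symmetric])
qed

context prob_space
begin

lemma entry_tail:
  fixes z :: "nat \<Rightarrow> nat \<Rightarrow> 'a \<Rightarrow> real" and Sm :: "real mat"
  assumes indep: "indep_vars (\<lambda>_. borel) (\<lambda>(i, j). z i j) ({..<N} \<times> {..<q})"
    and iz: "\<And>i j. i < N \<Longrightarrow> j < q \<Longrightarrow> integrable M (z i j)"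
    and Ez: "\<And>i j. i < N \<Longrightarrow> j < q \<Longrightarrow> expectation (z i j) = 0"
    and iz2: "\<And>i j. i < N \<Longrightarrow> j < q \<Longrightarrow> integrable M (\<lambda>x. (z i j x)\<^sup>2)"
    and Ez2: "\<And>i j. i < N \<Longrightarrow> j < q \<Longrightarrow> expectation (\<lambda>x. (z i j x)\<^sup>2) = 1"
    and sg: "\<And>i j. i < N \<Longrightarrow> j < q \<Longrightarrow> subgaussian_norm_le M (z i j) K"
    and K: "K > 0" and kap: "\<kappa> > 0"
    and diagS: "\<And>r. r < q \<Longrightarrow> (\<Sum>k<q. (Sm $$ (k, r))\<^sup>2) \<le> \<kappa>"
    and i: "i < q" and j: "j < q" and N: "N > 0" and eta: "\<eta> > 0"
  shows "measure M {x \<in> space M. real N * \<eta> \<le>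
      \<bar>\<Sum>l<N. ((\<Sum>k<q. Sm $$ (k, i) * z l k x) * (\<Sum>k<q. Sm $$ (k, j) * z l k x)
                 - (\<Sum>k<q. Sm $$ (k, i) * Sm $$ (k, j)))\<bar>}
    \<le> cstc \<kappa> K / ((real N)\<^sup>2 * \<eta> ^ 4)"
proof -
  define X where "X l r x = (\<Sum>k<q. Sm $$ (k, r) * z l k x)" for l r x
  define c where "c = (\<Sum>k<q. Sm $$ (k, i) * Sm $$ (k, j))"
  define W where "W l x = X l i x * X l j x - c" for l x
  define T where "T x = (\<Sum>l<N. W l x)" for x
  have zm: "z l k \<in> borel_measurable M" if "l < N" "k < q" for l k
    using iz[OF that] by auto
  have Xm: "X l r \<in> borel_measurable M" if "l < N" for l r
    unfolding X_def using zm[OF that] by (intro borel_measurable_sum borel_measurable_times) auto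
  have Wm: "W l \<in> borel_measurable M" if "l < N" for l
    unfolding W_def using Xm[OF that] by auto
  have cb: "\<bar>c\<bar> \<le> \<kappa>"
  proof -
    have "\<bar>c\<bar> \<le> (\<Sum>k<q. \<bar>Sm $$ (k, i) * Sm $$ (k, j)\<bar>)" unfolding c_def by (rule sum_abs)
    also have "\<dots> \<le> (\<Sum>k<q. ((Sm $$ (k, i))\<^sup>2 + (Sm $$ (k, j))\<^sup>2) / 2)"
    proof (rule sum_mono)
      fix k
      show "\<bar>Sm $$ (k, i) * Sm $$ (k, j)\<bar> \<le> ((Sm $$ (k, i))\<^sup>2 + (Sm $$ (k, j))\<^sup>2) / 2"
        using sum_squares_bound[of "\<bar>Sm $$ (k, i)\<bar>" "\<bar>Sm $$ (k, j)\<bar>"] by (simp add: abs_mult)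
    qed
    also have "\<dots> = ((\<Sum>k<q. (Sm $$ (k, i))\<^sup>2) + (\<Sum>k<q. (Sm $$ (k, j))\<^sup>2)) / 2"
      by (simp add: sum_divide_distrib[symmetric] sum.distrib)
    also have "\<dots> \<le> \<kappa>" using diagS[OF i] diagS[OF j] by simp
    finally show ?thesis .
  qed
  have X8: "integrable M (\<lambda>x. X l r x ^ 8)" "expectation (\<lambda>x. X l r x ^ 8) \<le> C8c \<kappa> K"
    if "l < N" "r < q" for l r
    using row_mom8[OF indep iz Ez sg K kap diagS[OF that(2)] that(1)] unfolding X_def C8c_def by auto
  have W4pt: "W l x ^ 4 \<le> 4 * X l i x ^ 8 + 4 * X l j x ^ 8 + 8 * c ^ 4" for l x
  proof -
    have "W l x ^ 4 \<le> 8 * ((X l i x * X l j x) ^ 4 + c ^ 4)" unfolding W_def by (rule pow4_diff_le)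
    also have "\<dots> \<le> 8 * ((X l i x ^ 8 + X l j x ^ 8) / 2 + c ^ 4)"
      using prod4_le[of "X l i x" "X l j x"] by simp
    also have "\<dots> = 4 * X l i x ^ 8 + 4 * X l j x ^ 8 + 8 * c ^ 4" by (simp add: algebra_simps)
    finally show ?thesis .
  qed
  have c4: "c ^ 4 \<le> \<kappa> ^ 4"
  proof -
    have "\<bar>c\<bar> ^ 4 \<le> \<kappa> ^ 4" using cb by (intro power_mono) auto
    then show ?thesis by (simp add: power_even_abs)
  qed
  have W4: "integrable M (\<lambda>x. W l x ^ 4)" "expectation (\<lambda>x. W l x ^ 4) \<le> B4c \<kappa> K" if l: "l < N" for l
  proof -
    have ib: "integrable M (\<lambda>x. 4 * X l i x ^ 8 + 4 * X l j x ^ 8 + 8 * c ^ 4)"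
      using X8[OF l i] X8[OF l j] by auto
    show iW: "integrable M (\<lambda>x. W l x ^ 4)"
    proof (rule Bochner_Integration.integrable_bound[OF ib])
      show "(\<lambda>x. W l x ^ 4) \<in> borel_measurable M" by (rule borel_measurable_power[OF Wm[OF l]])
      show "AE x in M. norm (W l x ^ 4) \<le> norm (4 * X l i x ^ 8 + 4 * X l j x ^ 8 + 8 * c ^ 4)"
      proof (rule AE_I2)
        fix x
        have "0 \<le> W l x ^ 4" by (rule zero_le_even_power) simp
        moreover have "0 \<le> 4 * X l i x ^ 8 + 4 * X l j x ^ 8 + 8 * c ^ 4"
          by (intro add_nonneg_nonneg mult_nonneg_nonneg zero_le_even_power) auto
        ultimately show "norm (W l x ^ 4) \<le> norm (4 * X l i x ^ 8 + 4 * X l j x ^ 8 + 8 * c ^ 4)"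
          using W4pt[of l x] by simp
      qed
    qed
    have "expectation (\<lambda>x. W l x ^ 4) \<le> expectation (\<lambda>x. 4 * X l i x ^ 8 + 4 * X l j x ^ 8 + 8 * c ^ 4)"
      by (rule integral_mono[OF iW ib W4pt])
    also have "\<dots> = 4 * expectation (\<lambda>x. X l i x ^ 8) + 4 * expectation (\<lambda>x. X l j x ^ 8) + 8 * c ^ 4"
      using X8[OF l i] X8[OF l j] prob_space by (simp add: Bochner_Integration.integral_add)
    also have "\<dots> \<le> 4 * C8c \<kappa> K + 4 * C8c \<kappa> K + 8 * \<kappa> ^ 4"
      using X8[OF l i] X8[OF l j] c4 by linarith
    finally show "expectation (\<lambda>x. W l x ^ 4) \<le> B4c \<kappa> K" unfolding B4c_def by simp
  qed
  have W2: "expectation (\<lambda>x. W l x ^ 2) \<le> 1 + B4c \<kappa> K" if l: "l < N" for l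
  proof -
    have i2: "integrable M (\<lambda>x. W l x ^ 2)" by (rule integrable_pow_le4[OF Wm[OF l] W4(1)[OF l]]) simp
    have "W l x ^ 2 \<le> 1 + W l x ^ 4" for x
    proof (cases "\<bar>W l x\<bar> \<le> 1")
      case True
      then have "W l x ^ 2 \<le> 1" by (simp add: abs_le_square_iff[symmetric] power_le_one abs_square_le_1)
      moreover have "0 \<le> W l x ^ 4" by (rule zero_le_even_power) simp
      ultimately show ?thesis by linarith
    next
      case False
      then have "\<bar>W l x\<bar> ^ 2 \<le> \<bar>W l x\<bar> ^ 4" by (intro power_increasing) auto
      then show ?thesis by (simp add: power_even_abs)
    qed
    then have "expectation (\<lambda>x. W l x ^ 2) \<le> expectation (\<lambda>x. 1 + W l x ^ 4)"
      by (intro integral_mono i2) (use W4(1)[OF l] in auto)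
    also have "\<dots> = 1 + expectation (\<lambda>x. W l x ^ 4)"
      using W4(1)[OF l] prob_space by (simp add: Bochner_Integration.integral_add)
    finally show ?thesis using W4(2)[OF l] by simp
  qed
  have W1: "expectation (W l) = 0" if l: "l < N" for l
  proof -
    note cm = cross_moment[OF indep iz Ez iz2 Ez2 l, where a="\<lambda>k. Sm $$ (k, i)" and b="\<lambda>k. Sm $$ (k, j)"]
    have "expectation (W l) = expectation (\<lambda>x. X l i x * X l j x) - c"
      unfolding W_def using cm(1) prob_space unfolding X_def by (simp add: Bochner_Integration.integral_diff)
    also have "expectation (\<lambda>x. X l i x * X l j x) = c" using cm(2) unfolding X_def c_def .
    finally show ?thesis by simp
  qed
  have indW: "indep_vars (\<lambda>_. borel) W {..<N}"
  proof -
    define KK where "KK l = {l} \<times> {..<q}" for l :: nat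
    have r: "indep_vars (\<lambda>l. PiM (KK l) (\<lambda>_. borel)) (\<lambda>l \<omega>. restrict (\<lambda>qq. (\<lambda>(i, j). z i j) qq \<omega>) (KK l)) {..<N}"
      by (rule indep_vars_restrict[OF indep]) (auto simp: KK_def disjoint_family_on_def)
    define Y where "Y l f = (\<Sum>k<q. Sm $$ (k, i) * f (l, k)) * (\<Sum>k<q. Sm $$ (k, j) * f (l, k)) - c"
      for l and f :: "nat \<times> nat \<Rightarrow> real"
    have Ym: "Y l \<in> borel_measurable (PiM (KK l) (\<lambda>_. borel))" for l
    proof -
      have cm: "(\<lambda>f. f (l, k)) \<in> borel_measurable (PiM (KK l) (\<lambda>_. borel))" if "k < q" for k
        by (rule measurable_component_singleton) (use that in \<open>simp add: KK_def\<close>)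
      show ?thesis unfolding Y_def
        by (intro borel_measurable_diff borel_measurable_times borel_measurable_sum borel_measurable_const cm) auto
    qed
    have "indep_vars (\<lambda>_. borel) (\<lambda>l x. Y l (restrict (\<lambda>qq. (\<lambda>(i, j). z i j) qq x) (KK l))) {..<N}"
      by (rule indep_vars_compose2[OF r]) (rule Ym)
    moreover have "(\<lambda>x. Y l (restrict (\<lambda>qq. (\<lambda>(i, j). z i j) qq x) (KK l))) = W l" for l
      by (rule ext) (simp add: Y_def W_def X_def KK_def)
    ultimately show ?thesis by simp
  qed
  have fm: "integrable M (\<lambda>x. (\<Sum>l\<in>{..<N}. W l x) ^ 4) \<and>
    expectation (\<lambda>x. (\<Sum>l\<in>{..<N}. W l x) ^ 4) \<le> real (card {..<N}) * B4c \<kappa> K + 3 * (real (card {..<N}))\<^sup>2 * (1 + B4c \<kappa> K)\<^sup>2 \<and>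
    expectation (\<lambda>x. (\<Sum>l\<in>{..<N}. W l x)) = 0 \<and>
    expectation (\<lambda>x. (\<Sum>l\<in>{..<N}. W l x) ^ 2) \<le> real (card {..<N}) * (1 + B4c \<kappa> K)"
    by (rule fourth_moment_sum[OF _ indW]) (use W4 W1 W2 in auto)
  have iT4: "integrable M (\<lambda>x. T x ^ 4)" using fm unfolding T_def by simp
  have B4nn: "B4c \<kappa> K \<ge> 0" unfolding B4c_def C8c_def using kap by simp
  have ET4: "expectation (\<lambda>x. T x ^ 4) \<le> (real N)\<^sup>2 * cstc \<kappa> K"
  proof -
    have "expectation (\<lambda>x. T x ^ 4) \<le> real N * B4c \<kappa> K + 3 * (real N)\<^sup>2 * (1 + B4c \<kappa> K)\<^sup>2"
      using fm unfolding T_def by simp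
    also have "real N * B4c \<kappa> K \<le> (real N)\<^sup>2 * B4c \<kappa> K"
      using N B4nn by (intro mult_right_mono) (auto simp: power2_eq_square)
    finally show ?thesis unfolding cstc_def by (simp add: algebra_simps)
  qed
  have Nh: "real N * \<eta> > 0" using N eta by simp
  have "{x \<in> space M. real N * \<eta> \<le> \<bar>T x\<bar>} = {x \<in> space M. (real N * \<eta>) ^ 4 \<le> T x ^ 4}"
  proof -
    have "real N * \<eta> \<le> \<bar>T x\<bar> \<longleftrightarrow> (real N * \<eta>) ^ 4 \<le> \<bar>T x\<bar> ^ 4" for x
      by (rule power_mono_iff[symmetric]) (use Nh in auto)
    then show ?thesis by (simp add: power_even_abs)
  qed
  then have "measure M {x \<in> space M. real N * \<eta> \<le> \<bar>T x\<bar>} = measure M {x \<in> space M. (real N * \<eta>) ^ 4 \<le> T x ^ 4}"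
    by simp
  also have "\<dots> \<le> expectation (\<lambda>x. T x ^ 4) / (real N * \<eta>) ^ 4"
    by (rule integral_Markov_inequality_measure[OF iT4, of "space M"]) (use Nh N eta in \<open>auto intro: zero_le_even_power\<close>)
  also have "\<dots> \<le> (real N)\<^sup>2 * cstc \<kappa> K / (real N * \<eta>) ^ 4"
    using ET4 Nh by (intro divide_right_mono) auto
  also have "\<dots> = cstc \<kappa> K / ((real N)\<^sup>2 * \<eta> ^ 4)"
    using N eta by (simp add: field_simps power2_eq_square eval_nat_numeral)
  finally show ?thesis unfolding T_def W_def X_def c_def .
qed

end

lemma mult_entry:
  fixes zz :: "nat \<Rightarrow> nat \<Rightarrow> real" and Sm :: "real mat"
  assumes Sm: "Sm \<in> carrier_mat q q" and l: "l < N" and r: "r < q"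
  shows "(mat N q (\<lambda>(i, j). zz i j) * Sm) $$ (l, r) = (\<Sum>k<q. Sm $$ (k, r) * zz l k)"
  using Sm l r by (simp add: scalar_prod_def atLeast0LessThan mult.commute)

lemma D_entry:
  fixes zz :: "nat \<Rightarrow> nat \<Rightarrow> real" and Sm Sg :: "real mat"
  assumes Sm: "Sm \<in> carrier_mat q q" and Sg: "Sg \<in> carrier_mat q q"
    and i: "i < q" and j: "j < q" and N: "N > 0"
  shows "(block_sample_cov bs (mat N q (\<lambda>(i, j). zz i j) * Sm) - Sg) $$ (i, j) =
    (if same_block bs i j then
      (\<Sum>l<N. (\<Sum>k<q. Sm $$ (k, i) * zz l k) * (\<Sum>k<q. Sm $$ (k, j) * zz l k) - Sg $$ (i, j)) / real N
     else - Sg $$ (i, j))"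
proof -
  let ?X = "mat N q (\<lambda>(i, j). zz i j) * Sm"
  have dX: "dim_row ?X = N" "dim_col ?X = q" using Sm by auto
  have "(block_sample_cov bs ?X - Sg) $$ (i, j) = block_sample_cov bs ?X $$ (i, j) - Sg $$ (i, j)"
    using Sg i j by (simp add: block_sample_cov_def dX)
  also have "block_sample_cov bs ?X $$ (i, j) = (if same_block bs i j then
      (1 / real N) * (\<Sum>l<N. ?X $$ (l, i) * ?X $$ (l, j)) else 0)"
    unfolding block_sample_cov_def dX using i j by simp
  also have "(\<Sum>l<N. ?X $$ (l, i) * ?X $$ (l, j)) = (\<Sum>l<N. (\<Sum>k<q. Sm $$ (k, i) * zz l k) * (\<Sum>k<q. Sm $$ (k, j) * zz l k))"
    by (rule sum.cong) (use mult_entry[OF Sm _ i] mult_entry[OF Sm _ j] in auto)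
  finally show ?thesis using N by (auto simp: sum_subtractf field_simps)
qed

theorem proposition2:
  fixes M :: "nat \<Rightarrow> 'a measure"
    and p :: "nat \<Rightarrow> nat"
    and \<delta> \<kappa>min \<kappa>max K :: real
    and m :: nat
    and bs :: "nat \<Rightarrow> nat list"
    and Sigma S :: "nat \<Rightarrow> real mat"
    and z :: "nat \<Rightarrow> nat \<Rightarrow> nat \<Rightarrow> 'a \<Rightarrow> real"
  assumes ps: "\<And>n. prob_space (M n)"
    and ratio: "(\<lambda>n. real (p n) / real n) \<longlonglongrightarrow> \<delta>"
    and delta_pos: "0 < \<delta>"
    and kappa: "0 < \<kappa>min" "\<kappa>min \<le> \<kappa>max"
    and Sigma_dim: "\<And>n. Sigma n \<in> carrier_mat (p n) (p n)"
    and Sigma_sym: "\<And>n. transpose_mat (Sigma n) = Sigma n"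
    and Sigma_eig: "\<And>n e. eigenvalue (Sigma n) e \<Longrightarrow> \<kappa>min \<le> e \<and> e \<le> \<kappa>max"
    and blocks_sum: "\<And>n. sum_list (bs n) = p n"
    and blocks_size: "\<And>n b. b \<in> set (bs n) \<Longrightarrow> b \<le> m"
    and Sigma_block: "\<And>n. block_diagonal (bs n) (Sigma n)"
    and S_dim: "\<And>n. S n \<in> carrier_mat (p n) (p n)"
    and S_sym: "\<And>n. transpose_mat (S n) = S n"
    and S_psd: "\<And>n e. eigenvalue (S n) e \<Longrightarrow> 0 \<le> e"
    and S_sq: "\<And>n. S n * S n = Sigma n"
    and indep: "\<And>n. prob_space.indep_vars (M n) (\<lambda>_. borel) (\<lambda>(i, j). z n i j) ({..<n} \<times> {..<p n})"
    and integrable: "\<And>n i j. i < n \<Longrightarrow> j < p n \<Longrightarrow> integrable (M n) (z n i j)"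
    and mean0: "\<And>n i j. i < n \<Longrightarrow> j < p n \<Longrightarrow> prob_space.expectation (M n) (z n i j) = 0"
    and sq_integrable: "\<And>n i j. i < n \<Longrightarrow> j < p n \<Longrightarrow> integrable (M n) (\<lambda>x. (z n i j x)\<^sup>2)"
    and var1: "\<And>n i j. i < n \<Longrightarrow> j < p n \<Longrightarrow> prob_space.expectation (M n) (\<lambda>x. (z n i j x)\<^sup>2) = 1"
    and K_pos: "0 < K"
    and subg: "\<And>n i j. i < n \<Longrightarrow> j < p n \<Longrightarrow> subgaussian_norm_le (M n) (z n i j) K"
  shows "\<And>\<epsilon>. 0 < \<epsilon> \<Longrightarrow>
    (\<lambda>n. measure (M n) {\<omega> \<in> space (M n).
        op_norm (block_sample_cov (bs n) (mat n (p n) (\<lambda>(i, j). z n i j \<omega>) * S n) - Sigma n) > \<epsilon>})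
    \<longlonglongrightarrow> 0"
proof -
  fix \<epsilon> :: real assume eps: "0 < \<epsilon>"
  have kap: "\<kappa>max > 0" using kappa by simp
  define \<eta> where "\<eta> = \<epsilon> / real (Suc m)"
  have eta: "\<eta> > 0" unfolding \<eta>_def using eps by simp
  have meta: "real m * \<eta> \<le> \<epsilon>"
    unfolding \<eta>_def using eps by (simp add: field_simps)
  define Cn where "Cn n = real (p n) * real m * cstc \<kappa>max K / ((real n)\<^sup>2 * \<eta> ^ 4)" for n
  let ?f = "\<lambda>n. measure (M n) {\<omega> \<in> space (M n).
        op_norm (block_sample_cov (bs n) (mat n (p n) (\<lambda>(i, j). z n i j \<omega>) * S n) - Sigma n) > \<epsilon>}"
  have bound: "?f n \<le> Cn n" if n: "n > 0" for n
  proof -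
    interpret P: prob_space "M n" by (rule ps)
    define q where "q = p n"
    define Sm where "Sm = S n"
    define Sg where "Sg = Sigma n"
    have Smc: "Sm \<in> carrier_mat q q" unfolding Sm_def q_def by (rule S_dim)
    have Sgc: "Sg \<in> carrier_mat q q" unfolding Sg_def q_def by (rule Sigma_dim)
    have symS: "Sm $$ (a, b) = Sm $$ (b, a)" if "a < q" "b < q" for a b
    proof -
      have "Sm $$ (a, b) = transpose_mat Sm $$ (b, a)" using Smc that by simp
      then show ?thesis using S_sym unfolding Sm_def by simp
    qed
    have Sg_eq: "Sg $$ (a, b) = (\<Sum>k<q. Sm $$ (k, a) * Sm $$ (k, b))" if a: "a < q" and b: "b < q" for a b
    proof -
      have "Sg = Sm * Sm" unfolding Sg_def Sm_def using S_sq by simp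
      then have "Sg $$ (a, b) = (\<Sum>k<q. Sm $$ (a, k) * Sm $$ (k, b))"
        using Smc a b by (simp add: scalar_prod_def atLeast0LessThan)
      also have "\<dots> = (\<Sum>k<q. Sm $$ (k, a) * Sm $$ (k, b))"
        using symS a by (intro sum.cong) auto
      finally show ?thesis .
    qed
    have diag: "(\<Sum>k<q. (Sm $$ (k, r))\<^sup>2) \<le> \<kappa>max" if r: "r < q" for r
    proof -
      have "Sg $$ (r, r) \<le> \<kappa>max"
      proof (rule sym_diag_le[OF Sgc _ _ r])
        show "transpose_mat Sg = Sg" unfolding Sg_def by (rule Sigma_sym)
        fix e assume "eigenvalue Sg e"
        then show "0 \<le> e \<and> e \<le> \<kappa>max" using Sigma_eig[of n e] kappa unfolding Sg_def by auto
      qed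
      then show ?thesis using Sg_eq[OF r r] by (simp add: power2_eq_square)
    qed
    define T where "T i j \<omega> = (\<Sum>l<n. (\<Sum>k<q. Sm $$ (k, i) * z n l k \<omega>) * (\<Sum>k<q. Sm $$ (k, j) * z n l k \<omega>)
       - (\<Sum>k<q. Sm $$ (k, i) * Sm $$ (k, j)))" for i j \<omega>
    have tail: "measure (M n) {\<omega> \<in> space (M n). real n * \<eta> \<le> \<bar>T i j \<omega>\<bar>} \<le> cstc \<kappa>max K / ((real n)\<^sup>2 * \<eta> ^ 4)"
      if i: "i < q" and j: "j < q" for i j
      unfolding T_def
      by (rule P.entry_tail[OF indep[of n, folded q_def] integrable[of _ n, folded q_def] mean0[of _ n, folded q_def]
          sq_integrable[of _ n, folded q_def] var1[of _ n, folded q_def] subg[of _ n, folded q_def]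
          K_pos kap diag i j n eta])
    have zm: "z n l k \<in> borel_measurable (M n)" if "l < n" "k < q" for l k
      using integrable[of l n k] that unfolding q_def by auto
    have Tm: "T i j \<in> borel_measurable (M n)" for i j
      unfolding T_def using zm
      by (intro borel_measurable_sum borel_measurable_diff borel_measurable_times borel_measurable_const) auto
    define Pairs where "Pairs = Product_Type.Sigma {..<q} (\<lambda>i. {j \<in> {..<q}. same_block (bs n) i j})"
    define A where "A ij = {\<omega> \<in> space (M n). real n * \<eta> \<le> \<bar>T (fst ij) (snd ij) \<omega>\<bar>}" for ij
    have Asets: "A ij \<in> sets (M n)" for ij
      unfolding A_def using Tm[of "fst ij" "snd ij"] by measurable
    have incl: "{\<omega> \<in> space (M n).
        op_norm (block_sample_cov (bs n) (mat n (p n) (\<lambda>(i, j). z n i j \<omega>) * S n) - Sigma n) > \<epsilon>}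
        \<subseteq> (\<Union>ij\<in>Pairs. A ij)"
    proof
      fix \<omega> assume om: "\<omega> \<in> {\<omega> \<in> space (M n).
        op_norm (block_sample_cov (bs n) (mat n (p n) (\<lambda>(i, j). z n i j \<omega>) * S n) - Sigma n) > \<epsilon>}"
      show "\<omega> \<in> (\<Union>ij\<in>Pairs. A ij)"
      proof (rule ccontr)
        assume nA: "\<omega> \<notin> (\<Union>ij\<in>Pairs. A ij)"
        define D where "D = block_sample_cov (bs n) (mat n q (\<lambda>(i, j). z n i j \<omega>) * Sm) - Sg"
        have Dc: "D \<in> carrier_mat q q" unfolding D_def block_sample_cov_def using Smc Sgc by auto
        have De: "D $$ (i, j) = (if same_block (bs n) i j then T i j \<omega> / real n else 0)"
          if i: "i < q" and j: "j < q" for i j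
        proof -
          have "D $$ (i, j) = (if same_block (bs n) i j then
              (\<Sum>l<n. (\<Sum>k<q. Sm $$ (k, i) * z n l k \<omega>) * (\<Sum>k<q. Sm $$ (k, j) * z n l k \<omega>) - Sg $$ (i, j)) / real n
             else - Sg $$ (i, j))"
            unfolding D_def by (rule D_entry[OF Smc Sgc i j n])
          moreover have "\<not> same_block (bs n) i j \<Longrightarrow> Sg $$ (i, j) = 0"
            using Sigma_block[of n] Sgc i j unfolding block_diagonal_def Sg_def by auto
          ultimately show ?thesis unfolding T_def using Sg_eq[OF i j] by simp
        qed
        have off: "D $$ (i, j) = 0" if "i < q" "j < q" "\<not> same_block (bs n) i j" for i j
          using De that by simp
        have bnd: "\<bar>D $$ (i, j)\<bar> \<le> \<eta>" if i: "i < q" and j: "j < q" for i j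
        proof (cases "same_block (bs n) i j")
          case True
          then have "(i, j) \<in> Pairs" unfolding Pairs_def using i j by auto
          then have "\<omega> \<notin> A (i, j)" using nA by auto
          then have "\<bar>T i j \<omega>\<bar> < real n * \<eta>" using om unfolding A_def by auto
          then have "\<bar>T i j \<omega>\<bar> / real n \<le> \<eta>" using n by (simp add: field_simps)
          then show ?thesis using De[OF i j] True by simp
        next
          case False
          then show ?thesis using De[OF i j] eta by simp
        qed
        have "op_norm D \<le> real m * \<eta>"
          by (rule op_norm_le[OF Dc off bnd blocks_size]) (use eta in auto)
        then have "op_norm D \<le> \<epsilon>" using meta by simp
        then show False using om unfolding D_def q_def Sm_def Sg_def by simp
      qed
    qed
    have finP: "finite Pairs" unfolding Pairs_def by simp
    have cardP: "card Pairs \<le> q * m"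
    proof -
      have "card Pairs = (\<Sum>i<q. card {j \<in> {..<q}. same_block (bs n) i j})"
        unfolding Pairs_def by simp
      also have "\<dots> \<le> (\<Sum>i<q. m)"
        by (rule sum_mono) (rule card_same_block[OF blocks_size])
      finally show ?thesis by simp
    qed
    have "?f n \<le> measure (M n) (\<Union>ij\<in>Pairs. A ij)"
      by (rule P.finite_measure_mono[OF incl]) (use finP Asets in auto)
    also have "\<dots> \<le> (\<Sum>ij\<in>Pairs. measure (M n) (A ij))"
      by (rule P.finite_measure_subadditive_finite[OF finP]) (use Asets in auto)
    also have "\<dots> \<le> (\<Sum>ij\<in>Pairs. cstc \<kappa>max K / ((real n)\<^sup>2 * \<eta> ^ 4))"
    proof (rule sum_mono)
      fix ij assume "ij \<in> Pairs"
      then have "fst ij < q" "snd ij < q" unfolding Pairs_def by auto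
      then show "measure (M n) (A ij) \<le> cstc \<kappa>max K / ((real n)\<^sup>2 * \<eta> ^ 4)"
        unfolding A_def by (rule tail)
    qed
    also have "\<dots> = real (card Pairs) * (cstc \<kappa>max K / ((real n)\<^sup>2 * \<eta> ^ 4))" by simp
    also have "\<dots> \<le> real (q * m) * (cstc \<kappa>max K / ((real n)\<^sup>2 * \<eta> ^ 4))"
    proof (rule mult_right_mono)
      show "real (card Pairs) \<le> real (q * m)" using cardP by (simp only: of_nat_le_iff)
      have "cstc \<kappa>max K \<ge> 0" unfolding cstc_def B4c_def C8c_def using kap by simp
      then show "0 \<le> cstc \<kappa>max K / ((real n)\<^sup>2 * \<eta> ^ 4)" using eta by simp
    qed
    also have "\<dots> = Cn n" unfolding Cn_def q_def by simp
    finally show ?thesis .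
  qed
  have lim: "Cn \<longlonglongrightarrow> 0"
  proof -
    have "(\<lambda>n. (real (p n) / real n) * (real m * cstc \<kappa>max K / \<eta> ^ 4) * inverse (real n)) \<longlonglongrightarrow> \<delta> * (real m * cstc \<kappa>max K / \<eta> ^ 4) * 0"
      by (intro tendsto_mult ratio tendsto_const lim_inverse_n)
    then have tl: "(\<lambda>n. (real (p n) / real n) * (real m * cstc \<kappa>max K / \<eta> ^ 4) * inverse (real n)) \<longlonglongrightarrow> 0" by simp
    have eq: "Cn n = (real (p n) / real n) * (real m * cstc \<kappa>max K / \<eta> ^ 4) * inverse (real n)" if "n > 0" for n
      unfolding Cn_def using that eta by (simp add: field_simps power2_eq_square)
    have ev: "\<forall>\<^sub>F n in sequentially. (real (p n) / real n) * (real m * cstc \<kappa>max K / \<eta> ^ 4) * inverse (real n) = Cn n"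
      unfolding eventually_sequentially using eq by (intro exI[of _ 1]) auto
    show ?thesis by (rule Lim_transform_eventually[OF tl ev])
  qed
  show "?f \<longlonglongrightarrow> 0"
  proof (rule tendsto_sandwich[OF _ _ tendsto_const lim])
    show "\<forall>\<^sub>F n in sequentially. 0 \<le> ?f n" by simp
    show "\<forall>\<^sub>F n in sequentially. ?f n \<le> Cn n"
      using bound by (auto simp: eventually_sequentially intro!: exI[of _ 1])
  qed
qed

end
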